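(* For each of the classes $\mathcal{T}_1$ (the $T_1$-spaces), $\mathcal{T}_2$ (the Hausdorff spaces), $\mathcal{R}$ (the regular spaces) and $\mathcal{M}$ (the metrisable spaces), the $\pi$-index set $\{m\in\omega\mid \pi(m)\in\mathcal{C}\}$ is $\Pi^1_1$.
   Context: $P\omega$ is the powerset of $\omega$ with the Scott topology, whose basic open sets are $\check D_n=\{A\subseteq\omega\mid D_n\subseteq A\}$, where $(D_n)$ is the standard numbering of finite subsets of $\omega$. $\pi$ is the standard numbering of the $\Pi^0_2$-subspaces of $P\omega$ (effective Borel hierarchy): writing $U_k=\bigcup_{n\in W_k}\check D_n$ for the standard numbering of c.e. open sets ($W_k$ the $k$-th c.e. set), $\pi(m)=\{A\subseteq\omega\mid \forall i\,(A\in U_{\langle m,i,0\rangle}\to A\in U_{\langle m,i,1\rangle})\}$ (for a computable tupling function), equipped with the subspace topology. *)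

theory Defs
  imports "HOL-Analysis.Analysis" "HOL-Library.Nat_Bijection"
begin

datatype trm = TVar nat | TZero | TSuc trm | TPlus trm trm | TTimes trm trm

fun tval :: "(nat \<Rightarrow> nat) \<Rightarrow> trm \<Rightarrow> nat" where
  "tval e (TVar i) = e i"
| "tval e TZero = 0"
| "tval e (TSuc t) = Suc (tval e t)"
| "tval e (TPlus s t) = tval e s + tval e t"
| "tval e (TTimes s t) = tval e s * tval e t"

datatype fm = FEq trm trm | FLess trm trm | FMem trm | FNot fm | FAnd fm fm | FOr fm fm
  | FEx fm | FAll fm | FBEx trm fm | FBAll trm fm

text \<open>de Bruijn semantics: variable 0 is the innermost bound number variable;
  \<open>X\<close> interprets the (unique) set variable.\<close>
fun sat :: "nat set \<Rightarrow> (nat \<Rightarrow> nat) \<Rightarrow> fm \<Rightarrow> bool" where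
  "sat X e (FEq s t) = (tval e s = tval e t)"
| "sat X e (FLess s t) = (tval e s < tval e t)"
| "sat X e (FMem t) = (tval e t \<in> X)"
| "sat X e (FNot \<phi>) = (\<not> sat X e \<phi>)"
| "sat X e (FAnd \<phi> \<psi>) = (sat X e \<phi> \<and> sat X e \<psi>)"
| "sat X e (FOr \<phi> \<psi>) = (sat X e \<phi> \<or> sat X e \<psi>)"
| "sat X e (FEx \<phi>) = (\<exists>v. sat X (case_nat v e) \<phi>)"
| "sat X e (FAll \<phi>) = (\<forall>v. sat X (case_nat v e) \<phi>)"
| "sat X e (FBEx t \<phi>) = (\<exists>v < tval e t. sat X (case_nat v e) \<phi>)"
| "sat X e (FBAll t \<phi>) = (\<forall>v < tval e t. sat X (case_nat v e) \<phi>)"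

text \<open>Bounded (Delta_0) formulas without the set variable, and Sigma_1 formulas
  (existential prefix over Delta_0), which define exactly the c.e. sets.\<close>
inductive delta0 :: "fm \<Rightarrow> bool" where
  "delta0 (FEq s t)"
| "delta0 (FLess s t)"
| "delta0 \<phi> \<Longrightarrow> delta0 (FNot \<phi>)"
| "delta0 \<phi> \<Longrightarrow> delta0 \<psi> \<Longrightarrow> delta0 (FAnd \<phi> \<psi>)"
| "delta0 \<phi> \<Longrightarrow> delta0 \<psi> \<Longrightarrow> delta0 (FOr \<phi> \<psi>)"
| "delta0 \<phi> \<Longrightarrow> delta0 (FBEx t \<phi>)"
| "delta0 \<phi> \<Longrightarrow> delta0 (FBAll t \<phi>)"

inductive sigma1 :: "fm \<Rightarrow> bool" where
  "delta0 \<phi> \<Longrightarrow> sigma1 \<phi>"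
| "sigma1 \<phi> \<Longrightarrow> sigma1 (FEx \<phi>)"

lemma div10_less: "n mod 10 \<noteq> 0 \<Longrightarrow> n div 10 < (n::nat)"
  by (cases "n = 0") auto

lemma decode_fst_less: "n mod 10 \<noteq> 0 \<Longrightarrow> fst (prod_decode (n div 10)) < n"
  by (metis div10_less le_prod_encode_1 order.strict_trans1 prod.collapse prod_decode_inverse)

lemma decode_snd_less: "n mod 10 \<noteq> 0 \<Longrightarrow> snd (prod_decode (n div 10)) < n"
  by (metis div10_less le_prod_encode_2 order.strict_trans1 prod.collapse prod_decode_inverse)

function dec_trm :: "nat \<Rightarrow> trm" where
  "dec_trm n =
    (if n mod 10 = 0 then TVar (n div 10)
     else if n mod 10 = 1 then TZero
     else if n mod 10 = 2 then TSuc (dec_trm (n div 10))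
     else if n mod 10 = 3 then TPlus (dec_trm (fst (prod_decode (n div 10))))
                                     (dec_trm (snd (prod_decode (n div 10))))
     else TTimes (dec_trm (fst (prod_decode (n div 10))))
                 (dec_trm (snd (prod_decode (n div 10)))))"
  by pat_completeness auto
termination
  by (relation "Wellfounded.measure id") (auto simp: div10_less decode_fst_less decode_snd_less)

function dec_fm :: "nat \<Rightarrow> fm" where
  "dec_fm n =
    (if n mod 10 = 0 then FEq (dec_trm (fst (prod_decode (n div 10))))
                              (dec_trm (snd (prod_decode (n div 10))))
     else if n mod 10 = 1 then FLess (dec_trm (fst (prod_decode (n div 10))))
                                     (dec_trm (snd (prod_decode (n div 10))))
     else if n mod 10 = 2 then FMem (dec_trm (n div 10))
     else if n mod 10 = 3 then FNot (dec_fm (n div 10))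
     else if n mod 10 = 4 then FAnd (dec_fm (fst (prod_decode (n div 10))))
                                    (dec_fm (snd (prod_decode (n div 10))))
     else if n mod 10 = 5 then FOr (dec_fm (fst (prod_decode (n div 10))))
                                   (dec_fm (snd (prod_decode (n div 10))))
     else if n mod 10 = 6 then FEx (dec_fm (n div 10))
     else if n mod 10 = 7 then FAll (dec_fm (n div 10))
     else if n mod 10 = 8 then FBEx (dec_trm (fst (prod_decode (n div 10))))
                                    (dec_fm (snd (prod_decode (n div 10))))
     else FBAll (dec_trm (fst (prod_decode (n div 10))))
                (dec_fm (snd (prod_decode (n div 10)))))"
  by pat_completeness auto
termination
  by (relation "Wellfounded.measure id") (auto simp: div10_less decode_fst_less decode_snd_less)

definition W :: "nat \<Rightarrow> nat set" where
  "W k = (if sigma1 (dec_fm k) then {x. sat {} (case_nat x (\<lambda>_. 0)) (dec_fm k)} else {})"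

text \<open>Standard (canonical) numbering of finite sets: D n = set of positions of 1-bits of n.\<close>
definition D :: "nat \<Rightarrow> nat set" where
  "D n = {i. odd (n div 2 ^ i)}"

definition checkD :: "nat \<Rightarrow> nat set set" where
  "checkD n = {A. D n \<subseteq> A}"

definition scott_topology :: "nat set topology" where
  "scott_topology = topology_generated_by (range checkD)"

definition U :: "nat \<Rightarrow> nat set set" where
  "U k = (\<Union>n\<in>W k. checkD n)"

definition tup3 :: "nat \<Rightarrow> nat \<Rightarrow> nat \<Rightarrow> nat" where
  "tup3 m i j = prod_encode (m, prod_encode (i, j))"

definition pi_set :: "nat \<Rightarrow> nat set set" where
  "pi_set m = {A. \<forall>i. A \<in> U (tup3 m i 0) \<longrightarrow> A \<in> U (tup3 m i 1)}"

definition pi_top :: "nat \<Rightarrow> nat set topology" where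
  "pi_top m = subtopology scott_topology (pi_set m)"

definition Pi11 :: "nat set \<Rightarrow> bool" where
  "Pi11 A \<longleftrightarrow> (\<exists>\<phi>. \<forall>m. m \<in> A \<longleftrightarrow> (\<forall>X. sat X (case_nat m (\<lambda>_. 0)) \<phi>))"

end

theory Submission
  imports Defs
begin

fun tren :: "(nat \<Rightarrow> nat) \<Rightarrow> trm \<Rightarrow> trm" where
  "tren f (TVar i) = TVar (f i)"
| "tren f TZero = TZero"
| "tren f (TSuc t) = TSuc (tren f t)"
| "tren f (TPlus s t) = TPlus (tren f s) (tren f t)"
| "tren f (TTimes s t) = TTimes (tren f s) (tren f t)"

lemma tval_tren: "tval e (tren f t) = tval (\<lambda>i. e (f i)) t"
  by (induct t) auto

definition liftr :: "(nat \<Rightarrow> nat) \<Rightarrow> nat \<Rightarrow> nat" where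
  "liftr f = case_nat 0 (\<lambda>i. Suc (f i))"

fun fren :: "(nat \<Rightarrow> nat) \<Rightarrow> fm \<Rightarrow> fm" where
  "fren f (FEq s t) = FEq (tren f s) (tren f t)"
| "fren f (FLess s t) = FLess (tren f s) (tren f t)"
| "fren f (FMem t) = FMem (tren f t)"
| "fren f (FNot p) = FNot (fren f p)"
| "fren f (FAnd p q) = FAnd (fren f p) (fren f q)"
| "fren f (FOr p q) = FOr (fren f p) (fren f q)"
| "fren f (FEx p) = FEx (fren (liftr f) p)"
| "fren f (FAll p) = FAll (fren (liftr f) p)"
| "fren f (FBEx t p) = FBEx (tren f t) (fren (liftr f) p)"
| "fren f (FBAll t p) = FBAll (tren f t) (fren (liftr f) p)"

lemma case_nat_liftr: "(\<lambda>i. case_nat v e (liftr f i)) = case_nat v (\<lambda>i. e (f i))"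
  by (rule ext, simp add: liftr_def split: nat.split)

lemma sat_fren: "sat X e (fren f p) = sat X (\<lambda>i. e (f i)) p"
  by (induct p arbitrary: e f) (simp_all add: tval_tren case_nat_liftr)

definition ar :: "((nat \<Rightarrow> nat) \<Rightarrow> nat set \<Rightarrow> bool) \<Rightarrow> bool" where
  "ar P \<longleftrightarrow> (\<exists>p. \<forall>X e. sat X e p = P e X)"

lemma ar_eqI: "ar P \<Longrightarrow> (\<And>e X. P e X = Q e X) \<Longrightarrow> ar Q"
  unfolding ar_def by metis

lemma ar_true: "ar (\<lambda>e X. True)"
  unfolding ar_def by (rule exI[of _ "FEq TZero TZero"]) simp

lemma ar_false: "ar (\<lambda>e X. False)"
  unfolding ar_def by (rule exI[of _ "FLess TZero TZero"]) simp

lemma ar_not: "ar P \<Longrightarrow> ar (\<lambda>e X. \<not> P e X)"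
  unfolding ar_def by (metis sat.simps(4))

lemma ar_conj: "ar P \<Longrightarrow> ar Q \<Longrightarrow> ar (\<lambda>e X. P e X \<and> Q e X)"
  unfolding ar_def by (metis sat.simps(5))

lemma ar_disj: "ar P \<Longrightarrow> ar Q \<Longrightarrow> ar (\<lambda>e X. P e X \<or> Q e X)"
  unfolding ar_def by (metis sat.simps(6))

lemma ar_imp: "ar P \<Longrightarrow> ar Q \<Longrightarrow> ar (\<lambda>e X. P e X \<longrightarrow> Q e X)"
  by (rule ar_eqI[OF ar_disj[OF ar_not]]) auto

lemma ar_iff: "ar P \<Longrightarrow> ar Q \<Longrightarrow> ar (\<lambda>e X. P e X = Q e X)"
proof -
  assume a: "ar P" "ar Q"
  have "ar (\<lambda>e X. (P e X \<longrightarrow> Q e X) \<and> (Q e X \<longrightarrow> P e X))"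
    by (rule ar_conj; rule ar_imp; fact)
  then show ?thesis by (rule ar_eqI) auto
qed

lemma ar_if: "ar P \<Longrightarrow> ar Q \<Longrightarrow> ar R \<Longrightarrow> ar (\<lambda>e X. if P e X then Q e X else R e X)"
proof -
  assume a: "ar P" "ar Q" "ar R"
  have "ar (\<lambda>e X. (P e X \<and> Q e X) \<or> (\<not> P e X \<and> R e X))"
    by (intro ar_disj ar_conj ar_not a)
  then show ?thesis by (rule ar_eqI) auto
qed

lemma ar_ex: "ar (\<lambda>e X. P (e 0) (\<lambda>i. e (Suc i)) X) \<Longrightarrow> ar (\<lambda>e X. \<exists>v. P v e X)"
  unfolding ar_def
proof (elim exE)
  fix p assume p: "\<forall>X e. sat X e p = P (e 0) (\<lambda>i. e (Suc i)) X"
  show "\<exists>p. \<forall>X e. sat X e p = (\<exists>v. P v e X)"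
    by (rule exI[of _ "FEx p"]) (simp add: p)
qed

lemma ar_all: "ar (\<lambda>e X. P (e 0) (\<lambda>i. e (Suc i)) X) \<Longrightarrow> ar (\<lambda>e X. \<forall>v. P v e X)"
  unfolding ar_def
proof (elim exE)
  fix p assume p: "\<forall>X e. sat X e p = P (e 0) (\<lambda>i. e (Suc i)) X"
  show "\<exists>p. \<forall>X e. sat X e p = (\<forall>v. P v e X)"
    by (rule exI[of _ "FAll p"]) (simp add: p)
qed

lemma ar_ren: "ar P \<Longrightarrow> ar (\<lambda>e X. P (\<lambda>i. e (f i)) X)"
  unfolding ar_def
proof (elim exE)
  fix p assume p: "\<forall>X e. sat X e p = P e X"
  show "\<exists>p. \<forall>X e. sat X e p = P (\<lambda>i. e (f i)) X"
    by (rule exI[of _ "fren f p"]) (simp add: p sat_fren)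
qed

definition atm :: "((nat \<Rightarrow> nat) \<Rightarrow> nat) \<Rightarrow> bool" where
  "atm F \<longleftrightarrow> (\<exists>t. \<forall>e. tval e t = F e)"

lemma atm_var: "atm (\<lambda>e. e i)"
  unfolding atm_def by (rule exI[of _ "TVar i"]) simp

lemma atm_const: "atm (\<lambda>e. c)"
proof (induct c)
  case 0 then show ?case unfolding atm_def by (rule_tac exI[of _ TZero]) simp
next
  case (Suc c) then show ?case unfolding atm_def by (metis tval.simps(3))
qed

lemma atm_Suc: "atm F \<Longrightarrow> atm (\<lambda>e. Suc (F e))"
  unfolding atm_def by (metis tval.simps(3))
lemma atm_plus: "atm F \<Longrightarrow> atm G \<Longrightarrow> atm (\<lambda>e. F e + G e)"
  unfolding atm_def by (metis tval.simps(4))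
lemma atm_times: "atm F \<Longrightarrow> atm G \<Longrightarrow> atm (\<lambda>e. F e * G e)"
  unfolding atm_def by (metis tval.simps(5))

lemma ar_at_eq: "atm F \<Longrightarrow> atm G \<Longrightarrow> ar (\<lambda>e X. F e = G e)"
  unfolding atm_def ar_def by (metis sat.simps(1))
lemma ar_at_less: "atm F \<Longrightarrow> atm G \<Longrightarrow> ar (\<lambda>e X. F e < G e)"
  unfolding atm_def ar_def by (metis sat.simps(2))
lemma ar_at_mem: "atm F \<Longrightarrow> ar (\<lambda>e X. F e \<in> X)"
  unfolding atm_def ar_def by (metis sat.simps(3))

lemmas atm_intros = atm_var atm_const atm_Suc atm_plus atm_times

definition df :: "((nat \<Rightarrow> nat) \<Rightarrow> nat) \<Rightarrow> bool" where
  "df F \<longleftrightarrow> ar (\<lambda>e X. e 0 = F (\<lambda>i. e (Suc i)))"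

lemma df_ren: "df F \<Longrightarrow> df (\<lambda>e. F (\<lambda>i. e (f i)))"
  unfolding df_def
  by (rule ar_eqI[OF ar_ren[where f="case_nat 0 (\<lambda>i. Suc (f i))"]]) auto

lemma df_subst:
  assumes "df F" "ar (\<lambda>e X. P (e 0) (\<lambda>i. e (Suc i)) X)"
  shows "ar (\<lambda>e X. P (F e) e X)"
proof -
  have "ar (\<lambda>e X. \<exists>v. v = F e \<and> P v e X)"
    by (rule ar_ex) (rule ar_conj[OF assms(1)[unfolded df_def] assms(2)])
  then show ?thesis by (rule ar_eqI) auto
qed

lemma df_at: "atm F \<Longrightarrow> df F"
proof -
  assume "atm F"
  then obtain t where t: "\<And>e. tval e t = F e" unfolding atm_def by blast
  show "df F" unfolding df_def ar_def
    by (rule exI[of _ "FEq (TVar 0) (tren Suc t)"]) (simp add: tval_tren t)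
qed

lemma df_var: "df (\<lambda>e. e i)" by (rule df_at[OF atm_var])
lemma df_const: "df (\<lambda>e. c)" by (rule df_at[OF atm_const])

lemma ar_df_eq: "df F \<Longrightarrow> df G \<Longrightarrow> ar (\<lambda>e X. F e = G e)"
  by (rule df_subst[where P="\<lambda>v e X. v = G e"]) (simp_all add: df_def)

lemma ar_df_less: "df F \<Longrightarrow> df G \<Longrightarrow> ar (\<lambda>e X. F e < G e)"
proof -
  assume F: "df F" and G: "df G"
  have G': "df (\<lambda>e. G (\<lambda>i. e (Suc i)))" by (rule df_ren[of G Suc, OF G])
  have "ar (\<lambda>e X. e (Suc 0) < e 0)" by (intro ar_at_less atm_intros)
  then have "ar (\<lambda>e X. e 0 < G (\<lambda>i. e (Suc i)))"
    using df_subst[OF G', of "\<lambda>w e X. e 0 < w"] by (simp add: numeral_2_eq_2)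
  then show ?thesis using df_subst[OF F, of "\<lambda>v e X. v < G e"] by (simp add: numeral_2_eq_2)
qed

lemma ar_df_le: "df F \<Longrightarrow> df G \<Longrightarrow> ar (\<lambda>e X. F e \<le> G e)"
proof -
  assume F: "df F" and G: "df G"
  show ?thesis by (rule ar_eqI[OF ar_not[OF ar_df_less[OF G F]]]) auto
qed

lemma ar_df_mem: "df F \<Longrightarrow> ar (\<lambda>e X. F e \<in> X)"
proof -
  assume F: "df F"
  have "ar (\<lambda>e X. e 0 \<in> X)" by (rule ar_at_mem[OF atm_var])
  then show ?thesis using df_subst[OF F, of "\<lambda>v e X. v \<in> X"] by (simp add: numeral_2_eq_2)
qed

lemma df_comp1:
  assumes h: "ar (\<lambda>e X. e 0 = h (e 1))" and F: "df F"
  shows "df (\<lambda>e. h (F e))"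
proof -
  have F': "df (\<lambda>e. F (\<lambda>i. e (Suc i)))" by (rule df_ren[of F Suc, OF F])
  have "ar (\<lambda>e X. e 1 = h (e 0))"
    by (rule ar_eqI[OF ar_ren[OF h, where f="\<lambda>i. if i = 0 then 1 else 0"]]) auto
  then have "ar (\<lambda>e X. e 0 = h (F (\<lambda>i. e (Suc i))))"
    using df_subst[OF F', of "\<lambda>v e X. e 0 = h v"] by (simp add: numeral_2_eq_2)
  then show ?thesis unfolding df_def by (simp add: numeral_2_eq_2)
qed

lemma df_comp2:
  assumes h: "ar (\<lambda>e X. e 0 = h (e 1) (e 2))" and F: "df F" and G: "df G"
  shows "df (\<lambda>e. h (F e) (G e))"
proof -
  have F': "df (\<lambda>e. F (\<lambda>i. e (Suc i)))" by (rule df_ren[of F Suc, OF F])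
  have G': "df (\<lambda>e. G (\<lambda>i. e (Suc (Suc i))))" by (rule df_ren[of G "\<lambda>i. Suc (Suc i)", OF G])
  have "ar (\<lambda>e X. e 2 = h (e 1) (e 0))"
    by (rule ar_eqI[OF ar_ren[OF h, where f="\<lambda>i. if i = 0 then 2 else if i = 1 then 1 else 0"]]) auto
  then have "ar (\<lambda>e X. e 1 = h (e 0) (G (\<lambda>i. e (Suc (Suc i)))))"
    using df_subst[OF G', of "\<lambda>w e X. e 1 = h (e 0) w"] by (simp add: numeral_2_eq_2)
  then have "ar (\<lambda>e X. e 0 = h (F (\<lambda>i. e (Suc i))) (G (\<lambda>i. e (Suc i))))"
    using df_subst[OF F', of "\<lambda>v e X. e 0 = h v (G (\<lambda>i. e (Suc i)))"] by (simp add: numeral_2_eq_2)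
  then show ?thesis unfolding df_def by (simp add: numeral_2_eq_2)
qed

lemma df_Suc: "df F \<Longrightarrow> df (\<lambda>e. Suc (F e))"
  by (rule df_comp1[where h=Suc]) (intro ar_at_eq atm_intros)
lemma df_plus: "df F \<Longrightarrow> df G \<Longrightarrow> df (\<lambda>e. F e + G e)"
  by (rule df_comp2[where h="(+)"]) (intro ar_at_eq atm_intros)
lemma df_times: "df F \<Longrightarrow> df G \<Longrightarrow> df (\<lambda>e. F e * G e)"
  by (rule df_comp2[where h="(*)"]) (intro ar_at_eq atm_intros)

lemma two_triangle: "2 * triangle n = n * Suc n"
proof -
  have "even (n * Suc n)" by simp
  then show ?thesis unfolding triangle_def by simp
qed
lemma pe_graph: "(c = prod_encode (a, b)) = (2 * c = (a + b) * Suc (a + b) + 2 * a)"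
proof -
  have "2 * prod_encode (a, b) = (a + b) * Suc (a + b) + 2 * a"
    by (simp add: prod_encode_def two_triangle algebra_simps)
  then show ?thesis by auto
qed

lemma df_pe: "df F \<Longrightarrow> df G \<Longrightarrow> df (\<lambda>e. prod_encode (F e, G e))"
  apply (rule df_comp2[where h="\<lambda>a b. prod_encode (a, b)"])
  apply (rule ar_eqI[of "\<lambda>e X. 2 * e 0 = (e 1 + e 2) * Suc (e 1 + e 2) + 2 * e 1"])
  apply (intro ar_at_eq atm_intros)
  by (simp add: pe_graph)

lemmas ar_intros0 = ar_conj ar_disj ar_imp ar_iff ar_not ar_if ar_ex ar_all ar_true ar_false
  ar_df_eq ar_df_less ar_df_le ar_df_mem
lemmas df_intros0 = df_var df_const df_Suc df_plus df_times df_pe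

lemma df_fst: "df F \<Longrightarrow> df (\<lambda>e. fst (prod_decode (F e)))"
proof (rule df_comp1[where h="\<lambda>a. fst (prod_decode a)"])
  have "ar (\<lambda>e X. \<exists>b. e 1 = prod_encode (e 0, b))"
    by (intro ar_intros0 df_intros0)
  then show "ar (\<lambda>e X. e 0 = fst (prod_decode (e 1)))"
    by (rule ar_eqI) (metis fst_conv prod.collapse prod_decode_inverse prod_encode_inverse)
qed

lemma df_snd: "df F \<Longrightarrow> df (\<lambda>e. snd (prod_decode (F e)))"
proof (rule df_comp1[where h="\<lambda>a. snd (prod_decode a)"])
  have "ar (\<lambda>e X. \<exists>b. e 1 = prod_encode (b, e 0))"
    by (intro ar_intros0 df_intros0)
  then show "ar (\<lambda>e X. e 0 = snd (prod_decode (e 1)))"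
    by (rule ar_eqI) (metis snd_conv prod.collapse prod_decode_inverse prod_encode_inverse)
qed

lemma div_graph: "(c = 0 \<and> q = 0 \<or> (\<exists>r. r < c \<and> a = q*c + r)) = (q = a div (c::nat))"
proof (cases "c = 0")
  case False
  show ?thesis
  proof
    assume "c = 0 \<and> q = 0 \<or> (\<exists>r. r < c \<and> a = q*c + r)"
    then obtain r where "r < c" "a = q*c + r" using False by auto
    then show "q = a div c" by simp
  next
    assume "q = a div c"
    then have "a = q * c + a mod c" by simp
    then show "c = 0 \<and> q = 0 \<or> (\<exists>r. r < c \<and> a = q*c + r)" using False by (metis mod_less_divisor not_gr0)
  qed
qed simp
lemma mod_graph: "(c = 0 \<and> m = a \<or> (m < c \<and> (\<exists>q. a = q*c + m))) = (m = a mod (c::nat))"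
proof (cases "c = 0")
  case False
  show ?thesis
  proof
    assume "c = 0 \<and> m = a \<or> (m < c \<and> (\<exists>q. a = q*c + m))"
    then obtain q where "m < c" "a = q*c + m" using False by auto
    then show "m = a mod c" by simp
  next
    assume "m = a mod c"
    then have "a = (a div c) * c + m" by simp
    then show "c = 0 \<and> m = a \<or> (m < c \<and> (\<exists>q. a = q*c + m))" using False \<open>m = a mod c\<close> by (metis mod_less_divisor not_gr0)
  qed
qed simp

lemma df_div: "df F \<Longrightarrow> df G \<Longrightarrow> df (\<lambda>e. F e div G e)"
proof (rule df_comp2[where h="(div)"])
  have "ar (\<lambda>e X. (e 2 = 0 \<and> e 0 = 0) \<or> (\<exists>r. r < e 2 \<and> e 1 = e 0 * e 2 + r))"
    by (intro ar_intros0 df_intros0)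
  then show "ar (\<lambda>e X. e 0 = e 1 div e 2)"
    by (rule ar_eqI) (rule div_graph)
qed

lemma df_mod: "df F \<Longrightarrow> df G \<Longrightarrow> df (\<lambda>e. F e mod G e)"
proof (rule df_comp2[where h="(mod)"])
  have "ar (\<lambda>e X. (e 2 = 0 \<and> e 0 = e 1) \<or> (e 0 < e 2 \<and> (\<exists>q. e 1 = q * e 2 + e 0)))"
    by (intro ar_intros0 df_intros0)
  then show "ar (\<lambda>e X. e 0 = e 1 mod e 2)"
    by (rule ar_eqI) (rule mod_graph)
qed

lemmas ar_intros = ar_intros0
lemmas df_intros = df_intros0 df_fst df_snd df_div df_mod

declare dec_trm.simps [simp del] dec_fm.simps [simp del]

abbreviation pe :: "nat \<Rightarrow> nat \<Rightarrow> nat" where "pe a b \<equiv> prod_encode (a, b)"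

lemma snd_decode_less: "0 < c \<Longrightarrow> snd (prod_decode (c - Suc 0)) < c"
proof -
  assume "0 < c"
  have "snd (prod_decode (c - Suc 0)) \<le> prod_encode (prod_decode (c - Suc 0))"
    by (metis le_prod_encode_2 prod.collapse)
  then show ?thesis using \<open>0 < c\<close> by simp
qed

function envc :: "nat \<Rightarrow> nat \<Rightarrow> nat" where
  "envc c = (if c = 0 then (\<lambda>_. 0)
     else case_nat (fst (prod_decode (c - 1))) (envc (snd (prod_decode (c - 1)))))"
  by pat_completeness auto
termination
  by (relation "Wellfounded.measure id") (auto simp: snd_decode_less)

declare envc.simps [simp del]

lemma envc_0 [simp]: "envc 0 = (\<lambda>_. 0)"
  by (subst envc.simps) simp

lemma envc_Suc [simp]: "envc (Suc (pe a c)) = case_nat a (envc c)"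
  by (subst envc.simps) simp

lemma nz_pe: "c \<noteq> 0 \<Longrightarrow> \<exists>a c'. c = Suc (pe a c')"
  by (metis not0_implies_Suc prod.collapse prod_decode_inverse)

lemma less10_cases: "(k::nat) < 10 \<Longrightarrow> k = 0 \<or> k = 1 \<or> k = 2 \<or> k = 3 \<or> k = 4 \<or> k = 5 \<or>
      k = 6 \<or> k = 7 \<or> k = 8 \<or> k = 9"
  by (simp add: less_Suc_eq numeral_eq_Suc)
lemma mod10_cases: "(n::nat) mod 10 = 0 \<or> n mod 10 = 1 \<or> n mod 10 = 2 \<or> n mod 10 = 3 \<or> n mod 10 = 4 \<or> n mod 10 = 5 \<or>
      n mod 10 = 6 \<or> n mod 10 = 7 \<or> n mod 10 = 8 \<or> n mod 10 = 9"
  by (rule less10_cases) simp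

definition GLk :: "(nat \<Rightarrow> nat \<Rightarrow> bool) \<Rightarrow> bool" where
  "GLk R \<longleftrightarrow> (\<forall>c i v. R 0 (pe c (pe i v)) =
     ((c = 0 \<and> v = 0) \<or> (\<exists>a c'. c = Suc (pe a c') \<and> ((i = 0 \<and> v = a) \<or> (\<exists>j. i = Suc j \<and> R 0 (pe c' (pe j v)))))))"

lemma GLk_ok: "GLk R \<Longrightarrow> R 0 (pe c (pe i v)) = (v = envc c i)"
proof (induct c arbitrary: i v rule: less_induct)
  case (less c)
  have G: "R 0 (pe c (pe i v)) =
     ((c = 0 \<and> v = 0) \<or> (\<exists>a c'. c = Suc (pe a c') \<and> ((i = 0 \<and> v = a) \<or> (\<exists>j. i = Suc j \<and> R 0 (pe c' (pe j v))))))"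
    using less(2) unfolding GLk_def by (elim allE[of _ c] allE[of _ i] allE[of _ v])
  show ?case
  proof (cases "c = 0")
    case True then show ?thesis using G by simp
  next
    case False
    then obtain a c' where c: "c = Suc (pe a c')" using nz_pe by blast
    have lt: "c' < c" using c le_prod_encode_2[of c' a] by simp
    have "R 0 (pe c (pe i v)) = ((i = 0 \<and> v = a) \<or> (\<exists>j. i = Suc j \<and> R 0 (pe c' (pe j v))))"
      using G c by auto
    also have "\<dots> = ((i = 0 \<and> v = a) \<or> (\<exists>j. i = Suc j \<and> v = envc c' j))"
      using less(1)[OF lt less(2)] by simp
    also have "\<dots> = (v = envc c i)" using c by (cases i) auto
    finally show ?thesis .
  qed
qed

definition GVt :: "(nat \<Rightarrow> nat \<Rightarrow> bool) \<Rightarrow> bool" where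
  "GVt R \<longleftrightarrow> (\<forall>t c v. R 1 (pe t (pe c v)) =
     (if t mod 10 = 0 then R 0 (pe c (pe (t div 10) v))
      else if t mod 10 = 1 then v = 0
      else if t mod 10 = 2 then (\<exists>w. R 1 (pe (t div 10) (pe c w)) \<and> v = Suc w)
      else if t mod 10 = 3 then (\<exists>w1 w2. R 1 (pe (fst (prod_decode (t div 10))) (pe c w1)) \<and>
             R 1 (pe (snd (prod_decode (t div 10))) (pe c w2)) \<and> v = w1 + w2)
      else (\<exists>w1 w2. R 1 (pe (fst (prod_decode (t div 10))) (pe c w1)) \<and>
             R 1 (pe (snd (prod_decode (t div 10))) (pe c w2)) \<and> v = w1 * w2)))"

lemma GVt_ok: "GLk R \<Longrightarrow> GVt R \<Longrightarrow> R 1 (pe t (pe c v)) = (v = tval (envc c) (dec_trm t))"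
proof (induct t arbitrary: v rule: less_induct)
  case (less t)
  have G: "R 1 (pe t (pe c v)) = (if t mod 10 = 0 then R 0 (pe c (pe (t div 10) v))
      else if t mod 10 = 1 then v = 0
      else if t mod 10 = 2 then (\<exists>w. R 1 (pe (t div 10) (pe c w)) \<and> v = Suc w)
      else if t mod 10 = 3 then (\<exists>w1 w2. R 1 (pe (fst (prod_decode (t div 10))) (pe c w1)) \<and>
             R 1 (pe (snd (prod_decode (t div 10))) (pe c w2)) \<and> v = w1 + w2)
      else (\<exists>w1 w2. R 1 (pe (fst (prod_decode (t div 10))) (pe c w1)) \<and>
             R 1 (pe (snd (prod_decode (t div 10))) (pe c w2)) \<and> v = w1 * w2))"
    using less(3) unfolding GVt_def by (elim allE[of _ t] allE[of _ c] allE[of _ v])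
  have IH: "\<And>u w. t mod 10 \<noteq> 0 \<Longrightarrow> u = t div 10 \<or> u = fst (prod_decode (t div 10)) \<or> u = snd (prod_decode (t div 10))
     \<Longrightarrow> R 1 (pe u (pe c w)) = (w = tval (envc c) (dec_trm u))"
    using less(1)[OF div10_less less(2,3)] less(1)[OF decode_fst_less less(2,3)]
      less(1)[OF decode_snd_less less(2,3)] by blast
  from mod10_cases[of t] show ?case
  proof (elim disjE)
    assume k: "t mod 10 = 0" show ?thesis using G GLk_ok[OF less(2)] by (simp add: dec_trm.simps[of t] k)
  next
    assume k: "t mod 10 = 1" show ?thesis using G by (simp add: dec_trm.simps[of t] k)
  next
    assume k: "t mod 10 = 2" show ?thesis using G IH[of "t div 10"] by (simp add: dec_trm.simps[of t] k)
  next
    assume k: "t mod 10 = 3" show ?thesis using G IH by (simp add: dec_trm.simps[of t] k)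
  qed (use G IH in \<open>simp add: dec_trm.simps[of t]\<close>)+
qed

definition GTr :: "(nat \<Rightarrow> nat \<Rightarrow> bool) \<Rightarrow> bool" where
  "GTr R \<longleftrightarrow> (\<forall>n c. R 2 (pe n c) =
     (if n mod 10 = 0 then (\<exists>va vb. R 1 (pe (fst (prod_decode (n div 10))) (pe c va)) \<and>
             R 1 (pe (snd (prod_decode (n div 10))) (pe c vb)) \<and> va = vb)
      else if n mod 10 = 1 then (\<exists>va vb. R 1 (pe (fst (prod_decode (n div 10))) (pe c va)) \<and>
             R 1 (pe (snd (prod_decode (n div 10))) (pe c vb)) \<and> va < vb)
      else if n mod 10 = 2 then False
      else if n mod 10 = 3 then \<not> R 2 (pe (n div 10) c)
      else if n mod 10 = 4 then R 2 (pe (fst (prod_decode (n div 10))) c) \<and> R 2 (pe (snd (prod_decode (n div 10))) c)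
      else if n mod 10 = 5 then R 2 (pe (fst (prod_decode (n div 10))) c) \<or> R 2 (pe (snd (prod_decode (n div 10))) c)
      else if n mod 10 = 6 then (\<exists>v. R 2 (pe (n div 10) (Suc (pe v c))))
      else if n mod 10 = 7 then (\<forall>v. R 2 (pe (n div 10) (Suc (pe v c))))
      else if n mod 10 = 8 then (\<exists>vb. R 1 (pe (fst (prod_decode (n div 10))) (pe c vb)) \<and>
             (\<exists>v. v < vb \<and> R 2 (pe (snd (prod_decode (n div 10))) (Suc (pe v c)))))
      else (\<exists>vb. R 1 (pe (fst (prod_decode (n div 10))) (pe c vb)) \<and>
             (\<forall>v. v < vb \<longrightarrow> R 2 (pe (snd (prod_decode (n div 10))) (Suc (pe v c)))))))"

lemma GTr_ok: "GLk R \<Longrightarrow> GVt R \<Longrightarrow> GTr R \<Longrightarrow> R 2 (pe n c) = sat {} (envc c) (dec_fm n)"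
proof (induct n arbitrary: c rule: less_induct)
  case (less n)
  note V = GVt_ok[OF less(2,3)]
  have G: "R 2 (pe n c) =
     (if n mod 10 = 0 then (\<exists>va vb. R 1 (pe (fst (prod_decode (n div 10))) (pe c va)) \<and>
             R 1 (pe (snd (prod_decode (n div 10))) (pe c vb)) \<and> va = vb)
      else if n mod 10 = 1 then (\<exists>va vb. R 1 (pe (fst (prod_decode (n div 10))) (pe c va)) \<and>
             R 1 (pe (snd (prod_decode (n div 10))) (pe c vb)) \<and> va < vb)
      else if n mod 10 = 2 then False
      else if n mod 10 = 3 then \<not> R 2 (pe (n div 10) c)
      else if n mod 10 = 4 then R 2 (pe (fst (prod_decode (n div 10))) c) \<and> R 2 (pe (snd (prod_decode (n div 10))) c)
      else if n mod 10 = 5 then R 2 (pe (fst (prod_decode (n div 10))) c) \<or> R 2 (pe (snd (prod_decode (n div 10))) c)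
      else if n mod 10 = 6 then (\<exists>v. R 2 (pe (n div 10) (Suc (pe v c))))
      else if n mod 10 = 7 then (\<forall>v. R 2 (pe (n div 10) (Suc (pe v c))))
      else if n mod 10 = 8 then (\<exists>vb. R 1 (pe (fst (prod_decode (n div 10))) (pe c vb)) \<and>
             (\<exists>v. v < vb \<and> R 2 (pe (snd (prod_decode (n div 10))) (Suc (pe v c)))))
      else (\<exists>vb. R 1 (pe (fst (prod_decode (n div 10))) (pe c vb)) \<and>
             (\<forall>v. v < vb \<longrightarrow> R 2 (pe (snd (prod_decode (n div 10))) (Suc (pe v c))))))"
    using less(4) unfolding GTr_def by (elim allE[of _ n] allE[of _ c])
  have IH: "\<And>u c. n mod 10 \<noteq> 0 \<Longrightarrow> u = n div 10 \<or> u = fst (prod_decode (n div 10)) \<or> u = snd (prod_decode (n div 10))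
     \<Longrightarrow> R 2 (pe u c) = sat {} (envc c) (dec_fm u)"
    using less(1)[OF div10_less less(2,3,4)] less(1)[OF decode_fst_less less(2,3,4)]
      less(1)[OF decode_snd_less less(2,3,4)] by blast
  from mod10_cases[of n] show ?case
    by (elim disjE) (use G IH V in \<open>simp add: dec_fm.simps[of n]\<close>)+
qed

lemma delta0_inv [simp]:
  "delta0 (FEq s t)" "delta0 (FLess s t)" "\<not> delta0 (FMem t)"
  "delta0 (FNot p) = delta0 p" "delta0 (FAnd p q) = (delta0 p \<and> delta0 q)"
  "delta0 (FOr p q) = (delta0 p \<and> delta0 q)" "\<not> delta0 (FEx p)" "\<not> delta0 (FAll p)"
  "delta0 (FBEx t p) = delta0 p" "delta0 (FBAll t p) = delta0 p"
  by (auto intro: delta0.intros elim: delta0.cases)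

lemma sigma1_inv: "sigma1 p = (delta0 p \<or> (\<exists>q. p = FEx q \<and> sigma1 q))"
  by (subst sigma1.simps) auto

lemma delta0_dec: "delta0 (dec_fm n) = (if n mod 10 = 0 \<or> n mod 10 = 1 then True
      else if n mod 10 = 3 then delta0 (dec_fm (n div 10))
      else if n mod 10 = 4 \<or> n mod 10 = 5 then delta0 (dec_fm (fst (prod_decode (n div 10)))) \<and> delta0 (dec_fm (snd (prod_decode (n div 10))))
      else if n mod 10 = 8 \<or> n mod 10 = 9 then delta0 (dec_fm (snd (prod_decode (n div 10))))
      else False)"
  using mod10_cases[of n] by (elim disjE) (simp_all add: dec_fm.simps[of n])

lemma sigma1_dec: "sigma1 (dec_fm n) = (delta0 (dec_fm n) \<or> (n mod 10 = 6 \<and> sigma1 (dec_fm (n div 10))))"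
  apply (subst sigma1_inv)
  using mod10_cases[of n] by (elim disjE) (simp_all add: dec_fm.simps[of n])

definition GD0 :: "(nat \<Rightarrow> nat \<Rightarrow> bool) \<Rightarrow> bool" where
  "GD0 R \<longleftrightarrow> (\<forall>n. R 3 n = (if n mod 10 = 0 \<or> n mod 10 = 1 then True
      else if n mod 10 = 3 then R 3 (n div 10)
      else if n mod 10 = 4 \<or> n mod 10 = 5 then R 3 (fst (prod_decode (n div 10))) \<and> R 3 (snd (prod_decode (n div 10)))
      else if n mod 10 = 8 \<or> n mod 10 = 9 then R 3 (snd (prod_decode (n div 10)))
      else False))"

lemma GD0_ok: "GD0 R \<Longrightarrow> R 3 n = delta0 (dec_fm n)"
proof (induct n rule: less_induct)
  case (less n)
  have G: "R 3 n = (if n mod 10 = 0 \<or> n mod 10 = 1 then True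
      else if n mod 10 = 3 then R 3 (n div 10)
      else if n mod 10 = 4 \<or> n mod 10 = 5 then R 3 (fst (prod_decode (n div 10))) \<and> R 3 (snd (prod_decode (n div 10)))
      else if n mod 10 = 8 \<or> n mod 10 = 9 then R 3 (snd (prod_decode (n div 10)))
      else False)"
    using less(2) unfolding GD0_def by (elim allE[of _ n])
  have IH: "\<And>u. n mod 10 \<noteq> 0 \<Longrightarrow> u = n div 10 \<or> u = fst (prod_decode (n div 10)) \<or> u = snd (prod_decode (n div 10))
     \<Longrightarrow> R 3 u = delta0 (dec_fm u)"
    using less(1)[OF div10_less less(2)] less(1)[OF decode_fst_less less(2)]
      less(1)[OF decode_snd_less less(2)] by blast
  from mod10_cases[of n] show ?case
    by (elim disjE) (use G IH in \<open>simp_all add: delta0_dec[of n]\<close>)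
qed

definition GS1 :: "(nat \<Rightarrow> nat \<Rightarrow> bool) \<Rightarrow> bool" where
  "GS1 R \<longleftrightarrow> (\<forall>n. R 4 n = (R 3 n \<or> (n mod 10 = 6 \<and> R 4 (n div 10))))"

lemma GS1_ok: "GD0 R \<Longrightarrow> GS1 R \<Longrightarrow> R 4 n = sigma1 (dec_fm n)"
proof (induct n rule: less_induct)
  case (less n)
  have G: "R 4 n = (R 3 n \<or> (n mod 10 = 6 \<and> R 4 (n div 10)))"
    using less(3) unfolding GS1_def by (elim allE[of _ n])
  show ?case
  proof (cases "n mod 10 = 6")
    case True
    then have "R 4 (n div 10) = sigma1 (dec_fm (n div 10))"
      using less(1)[OF div10_less less(2,3)] by simp
    then show ?thesis using G GD0_ok[OF less(2)] sigma1_dec[of n] by simp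
  next
    case False
    then show ?thesis using G GD0_ok[OF less(2)] sigma1_dec[of n] by simp
  qed
qed

lemma D_0: "(0 \<in> D n) = (n mod 2 = 1)"
  by (simp add: D_def odd_iff_mod_2_eq_one)

lemma D_Suc: "(Suc j \<in> D n) = (j \<in> D (n div 2))"
  by (simp add: D_def div_mult2_eq)

definition GBt :: "(nat \<Rightarrow> nat \<Rightarrow> bool) \<Rightarrow> bool" where
  "GBt R \<longleftrightarrow> (\<forall>n i. R 5 (pe n i) = (if i = 0 then n mod 2 = 1 else (\<exists>j. i = Suc j \<and> R 5 (pe (n div 2) j))))"

lemma GBt_ok: "GBt R \<Longrightarrow> R 5 (pe n i) = (i \<in> D n)"
proof (induct i arbitrary: n)
  case 0
  then show ?case unfolding GBt_def by (simp add: D_0)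
next
  case (Suc j)
  have G: "R 5 (pe n (Suc j)) = (\<exists>j'. Suc j = Suc j' \<and> R 5 (pe (n div 2) j'))"
    using Suc(2) unfolding GBt_def by (elim allE[of _ n] allE[of _ "Suc j"]) simp
  then show ?case using Suc(1)[OF Suc(2)] by (simp add: D_Suc)
qed

definition Good :: "(nat \<Rightarrow> nat \<Rightarrow> bool) \<Rightarrow> bool" where
  "Good R \<longleftrightarrow> GLk R \<and> GVt R \<and> GTr R \<and> GD0 R \<and> GS1 R \<and> GBt R"

definition R0 :: "nat \<Rightarrow> nat \<Rightarrow> bool" where
  "R0 j y = (if j = 0 then snd (prod_decode (snd (prod_decode y))) = envc (fst (prod_decode y)) (fst (prod_decode (snd (prod_decode y))))
   else if j = 1 then snd (prod_decode (snd (prod_decode y))) = tval (envc (fst (prod_decode (snd (prod_decode y))))) (dec_trm (fst (prod_decode y)))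
   else if j = 2 then sat {} (envc (snd (prod_decode y))) (dec_fm (fst (prod_decode y)))
   else if j = 3 then delta0 (dec_fm y)
   else if j = 4 then sigma1 (dec_fm y)
   else if j = 5 then snd (prod_decode y) \<in> D (fst (prod_decode y))
   else False)"

lemma R0_simps:
  "R0 0 (pe c (pe i v)) = (v = envc c i)"
  "R0 1 (pe t (pe c v)) = (v = tval (envc c) (dec_trm t))"
  "R0 2 (pe n c) = sat {} (envc c) (dec_fm n)"
  "R0 3 n = delta0 (dec_fm n)"
  "R0 4 n = sigma1 (dec_fm n)"
  "R0 5 (pe n i) = (i \<in> D n)"
  by (simp_all add: R0_def)

lemma Good_R0: "Good R0"
  unfolding Good_def
proof (intro conjI)
  show "GLk R0" unfolding GLk_def R0_simps
  proof (intro allI)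
    fix c i v
    show "(v = envc c i) = (c = 0 \<and> v = 0 \<or> (\<exists>a c'. c = Suc (pe a c') \<and> (i = 0 \<and> v = a \<or> (\<exists>j. i = Suc j \<and> v = envc c' j))))"
    proof (cases "c = 0")
      case False
      then obtain a c' where c: "c = Suc (pe a c')" using nz_pe by blast
      then show ?thesis by (cases i) auto
    qed simp
  qed
  show "GVt R0" unfolding GVt_def R0_simps
  proof (intro allI)
    fix t c v
    show "(v = tval (envc c) (dec_trm t)) = (if t mod 10 = 0 then v = envc c (t div 10)
      else if t mod 10 = 1 then v = 0
      else if t mod 10 = 2 then (\<exists>w. w = tval (envc c) (dec_trm (t div 10)) \<and> v = Suc w)
      else if t mod 10 = 3 then (\<exists>w1 w2. w1 = tval (envc c) (dec_trm (fst (prod_decode (t div 10)))) \<and>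
             w2 = tval (envc c) (dec_trm (snd (prod_decode (t div 10)))) \<and> v = w1 + w2)
      else (\<exists>w1 w2. w1 = tval (envc c) (dec_trm (fst (prod_decode (t div 10)))) \<and>
             w2 = tval (envc c) (dec_trm (snd (prod_decode (t div 10)))) \<and> v = w1 * w2))"
      using mod10_cases[of t] by (elim disjE) (simp_all add: dec_trm.simps[of t])
  qed
  show "GTr R0" unfolding GTr_def R0_simps
  proof (intro allI)
    fix n c
    show "sat {} (envc c) (dec_fm n) =
     (if n mod 10 = 0 then (\<exists>va vb. va = tval (envc c) (dec_trm (fst (prod_decode (n div 10)))) \<and>
             vb = tval (envc c) (dec_trm (snd (prod_decode (n div 10)))) \<and> va = vb)
      else if n mod 10 = 1 then (\<exists>va vb. va = tval (envc c) (dec_trm (fst (prod_decode (n div 10)))) \<and>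
             vb = tval (envc c) (dec_trm (snd (prod_decode (n div 10)))) \<and> va < vb)
      else if n mod 10 = 2 then False
      else if n mod 10 = 3 then \<not> sat {} (envc c) (dec_fm (n div 10))
      else if n mod 10 = 4 then sat {} (envc c) (dec_fm (fst (prod_decode (n div 10)))) \<and> sat {} (envc c) (dec_fm (snd (prod_decode (n div 10))))
      else if n mod 10 = 5 then sat {} (envc c) (dec_fm (fst (prod_decode (n div 10)))) \<or> sat {} (envc c) (dec_fm (snd (prod_decode (n div 10))))
      else if n mod 10 = 6 then (\<exists>v. sat {} (envc (Suc (pe v c))) (dec_fm (n div 10)))
      else if n mod 10 = 7 then (\<forall>v. sat {} (envc (Suc (pe v c))) (dec_fm (n div 10)))
      else if n mod 10 = 8 then (\<exists>vb. vb = tval (envc c) (dec_trm (fst (prod_decode (n div 10)))) \<and>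
             (\<exists>v. v < vb \<and> sat {} (envc (Suc (pe v c))) (dec_fm (snd (prod_decode (n div 10))))))
      else (\<exists>vb. vb = tval (envc c) (dec_trm (fst (prod_decode (n div 10)))) \<and>
             (\<forall>v. v < vb \<longrightarrow> sat {} (envc (Suc (pe v c))) (dec_fm (snd (prod_decode (n div 10)))))))"
      using mod10_cases[of n] by (elim disjE) (simp_all add: dec_fm.simps[of n])
  qed
  show "GD0 R0" unfolding GD0_def R0_simps using delta0_dec by blast
  show "GS1 R0" unfolding GS1_def R0_simps using sigma1_dec by blast
  show "GBt R0" unfolding GBt_def R0_simps
    by (intro allI, case_tac i) (simp_all add: D_0 D_Suc)
qed

lemma ar_Good: "ar (\<lambda>e X. Good (\<lambda>j y. pe j y \<in> X))"
  unfolding Good_def GLk_def GVt_def GTr_def GD0_def GS1_def GBt_def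
  by (intro ar_intros df_intros)

definition Dsub :: "(nat \<Rightarrow> nat \<Rightarrow> bool) \<Rightarrow> nat \<Rightarrow> (nat \<Rightarrow> bool) \<Rightarrow> bool" where
  "Dsub R n P \<longleftrightarrow> (\<forall>i. R 5 (pe n i) \<longrightarrow> P i)"

definition inU :: "(nat \<Rightarrow> nat \<Rightarrow> bool) \<Rightarrow> nat \<Rightarrow> (nat \<Rightarrow> bool) \<Rightarrow> bool" where
  "inU R k P \<longleftrightarrow> (\<exists>n. R 4 k \<and> R 2 (pe k (Suc (pe n 0))) \<and> Dsub R n P)"

definition inS :: "(nat \<Rightarrow> nat \<Rightarrow> bool) \<Rightarrow> nat \<Rightarrow> (nat \<Rightarrow> bool) \<Rightarrow> bool" where
  "inS R m P \<longleftrightarrow> (\<forall>i. inU R (pe m (pe i 0)) P \<longrightarrow> inU R (pe m (pe i 1)) P)"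

lemma Good_D: assumes "Good R"
  shows "R 2 (pe n c) = sat {} (envc c) (dec_fm n)" "R 4 n = sigma1 (dec_fm n)" "R 5 (pe n i) = (i \<in> D n)"
  using assms unfolding Good_def by (auto simp: GTr_ok GS1_ok GBt_ok)

lemma Dsub_ok: "Good R \<Longrightarrow> Dsub R n P = (D n \<subseteq> Collect P)"
  unfolding Dsub_def by (auto simp: Good_D)

lemma envc_single: "envc (Suc (pe n 0)) = case_nat n (\<lambda>_. 0)"
  by simp

lemma inU_ok: "Good R \<Longrightarrow> inU R k P = (Collect P \<in> U k)"
  unfolding inU_def U_def W_def checkD_def
  by (auto simp: Good_D Dsub_ok envc_single simp del: envc_Suc)

lemma inS_ok: "Good R \<Longrightarrow> inS R m P = (Collect P \<in> pi_set m)"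
  unfolding inS_def pi_set_def tup3_def by (simp add: inU_ok)

definition mkX :: "(nat \<Rightarrow> nat \<Rightarrow> bool) \<Rightarrow> nat set" where
  "mkX R = {y. R (fst (prod_decode y)) (snd (prod_decode y))}"

lemma mkX_pe [simp]: "(pe j y \<in> mkX R) = R j y"
  by (simp add: mkX_def)

lemma mkX_R: "(\<lambda>j y. pe j y \<in> mkX R) = R"
  by (simp add: mkX_def)

lemma Pi11I:
  assumes "ar (\<lambda>e X. Phi (e 0) (\<lambda>j y. pe j y \<in> X))"
    and "\<And>m. m \<in> A \<longleftrightarrow> (\<forall>R. Phi m R)"
  shows "Pi11 A"
proof -
  obtain p where p: "\<And>X e. sat X e p = Phi (e 0) (\<lambda>j y. pe j y \<in> X)"
    using assms(1) unfolding ar_def by blast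
  show ?thesis unfolding Pi11_def
  proof (rule exI[of _ p], intro allI)
    fix m
    have "(\<forall>X. Phi m (\<lambda>j y. pe j y \<in> X)) = (\<forall>R. Phi m R)"
      by (metis mkX_R)
    then show "m \<in> A \<longleftrightarrow> (\<forall>X. sat X (case_nat m (\<lambda>_. 0)) p)"
      using assms(2) by (simp add: p)
  qed
qed

lemma D_bit: "D n = {i. bit n i}" by (simp add: D_def bit_iff_odd)
lemma D_fin: "finite (D n)"
proof -
  have "D n \<subseteq> {..<n}"
  proof
    fix i assume "i \<in> D n"
    show "i \<in> {..<n}"
    proof (rule ccontr)
      assume "i \<notin> {..<n}"
      then have "n < 2 ^ i" using less_exp[of n] by (meson lessThan_iff not_less order_less_le_trans power_increasing_iff one_less_numeral_iff semiring_norm(76))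
      then show False using \<open>i \<in> D n\<close> by (simp add: D_def)
    qed
  qed
  then show ?thesis by (rule finite_subset) simp
qed
lemma D_ex: "finite F \<Longrightarrow> \<exists>n. D n = F"
proof (induct rule: finite_induct)
  case empty show ?case by (rule exI[of _ 0]) (simp add: D_def)
next
  case (insert x F)
  then obtain n where "D n = F" by blast
  then show ?case by (intro exI[of _ "set_bit x n"]) (auto simp: D_bit bit_set_bit_iff)
qed

lemma D_single: "\<exists>n. D n = {x}" using D_ex[of "{x}"] by simp

lemma D_union: "\<exists>n. D n = D a \<union> D b" using D_ex[of "D a \<union> D b"] D_fin by simp

lemma checkD_0: "checkD 0 = UNIV"
  by (simp add: checkD_def D_def)

lemma scott_topspace [simp]: "topspace scott_topology = UNIV"
  unfolding scott_topology_def using checkD_0 by auto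

lemma scott_open: "openin scott_topology G \<longleftrightarrow> (\<forall>A\<in>G. \<exists>n. D n \<subseteq> A \<and> checkD n \<subseteq> G)"
proof
  assume "openin scott_topology G"
  then have "generate_topology_on (range checkD) G"
    unfolding scott_topology_def by (rule openin_topology_generated_by)
  then show "\<forall>A\<in>G. \<exists>n. D n \<subseteq> A \<and> checkD n \<subseteq> G"
  proof (induct rule: generate_topology_on.induct)
    case Empty then show ?case by simp
  next
    case (Int a b)
    show ?case
    proof
      fix A assume "A \<in> a \<inter> b"
      then obtain n1 n2 where "D n1 \<subseteq> A" "checkD n1 \<subseteq> a" "D n2 \<subseteq> A" "checkD n2 \<subseteq> b"
        using Int by blast
      moreover obtain n where "D n = D n1 \<union> D n2" using D_union by blast
      ultimately show "\<exists>n. D n \<subseteq> A \<and> checkD n \<subseteq> a \<inter> b"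
        by (intro exI[of _ n]) (auto simp: checkD_def)
    qed
  next
    case (UN K) then show ?case by blast
  next
    case (Basis s) then show ?case by (auto simp: checkD_def)
  qed
next
  assume R: "\<forall>A\<in>G. \<exists>n. D n \<subseteq> A \<and> checkD n \<subseteq> G"
  have "G = \<Union>{checkD n | n. checkD n \<subseteq> G}"
  proof
    show "G \<subseteq> \<Union>{checkD n | n. checkD n \<subseteq> G}"
    proof
      fix A assume "A \<in> G"
      then obtain n where n: "D n \<subseteq> A" "checkD n \<subseteq> G" using R by blast
      then have "checkD n \<in> {checkD n | n. checkD n \<subseteq> G}" by blast
      moreover have "A \<in> checkD n" using n by (simp add: checkD_def)
      ultimately show "A \<in> \<Union>{checkD n | n. checkD n \<subseteq> G}" by blast
    qed
  qed blast
  moreover have "generate_topology_on (range checkD) (\<Union>{checkD n | n. checkD n \<subseteq> G})"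
    by (rule generate_topology_on.UN) (auto intro: generate_topology_on.Basis)
  ultimately show "openin scott_topology G"
    unfolding scott_topology_def by (simp add: openin_topology_generated_by_iff)
qed

lemma checkD_open: "openin scott_topology (checkD k)"
  unfolding scott_open checkD_def by auto

lemma pi_topspace [simp]: "topspace (pi_top m) = pi_set m"
  by (simp add: pi_top_def)

lemma pi_open: "openin (pi_top m) V \<longleftrightarrow> V \<subseteq> pi_set m \<and> (\<forall>A\<in>V. \<exists>n. D n \<subseteq> A \<and> pi_set m \<inter> checkD n \<subseteq> V)"
proof
  assume "openin (pi_top m) V"
  then obtain G where G: "openin scott_topology G" "V = G \<inter> pi_set m"
    unfolding pi_top_def openin_subtopology by blast
  then show "V \<subseteq> pi_set m \<and> (\<forall>A\<in>V. \<exists>n. D n \<subseteq> A \<and> pi_set m \<inter> checkD n \<subseteq> V)"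
    unfolding scott_open by blast
next
  assume R: "V \<subseteq> pi_set m \<and> (\<forall>A\<in>V. \<exists>n. D n \<subseteq> A \<and> pi_set m \<inter> checkD n \<subseteq> V)"
  define G where "G = \<Union>{checkD n | n. pi_set m \<inter> checkD n \<subseteq> V}"
  have "openin scott_topology G"
    unfolding G_def by (rule openin_Union) (auto intro: checkD_open)
  moreover have "V = G \<inter> pi_set m"
  proof
    show "V \<subseteq> G \<inter> pi_set m"
    proof
      fix A assume "A \<in> V"
      then obtain n where n: "D n \<subseteq> A" "pi_set m \<inter> checkD n \<subseteq> V" using R by blast
      then have "checkD n \<in> {checkD n | n. pi_set m \<inter> checkD n \<subseteq> V}" by blast
      moreover have "A \<in> checkD n" using n by (simp add: checkD_def)
      ultimately show "A \<in> G \<inter> pi_set m" using R \<open>A \<in> V\<close> unfolding G_def by blast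
    qed
    show "G \<inter> pi_set m \<subseteq> V" unfolding G_def by blast
  qed
  ultimately show "openin (pi_top m) V"
    unfolding pi_top_def openin_subtopology by blast
qed

lemma basic_open: "openin (pi_top m) (pi_set m \<inter> checkD k)"
  unfolding pi_open checkD_def by (auto intro!: exI[of _ k])

lemma t1_char: "t1_space (pi_top m) \<longleftrightarrow> (\<forall>A\<in>pi_set m. \<forall>B\<in>pi_set m. A \<subseteq> B \<longrightarrow> A = B)"
proof
  assume T: "t1_space (pi_top m)"
  show "\<forall>A\<in>pi_set m. \<forall>B\<in>pi_set m. A \<subseteq> B \<longrightarrow> A = B"
  proof (intro ballI impI)
    fix A B assume AB: "A \<in> pi_set m" "B \<in> pi_set m" "A \<subseteq> B"
    show "A = B"
    proof (rule ccontr)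
      assume "A \<noteq> B"
      have "\<forall>x\<in>pi_set m. \<forall>y\<in>pi_set m. x \<noteq> y \<longrightarrow> (\<exists>U. openin (pi_top m) U \<and> x \<in> U \<and> y \<notin> U)"
        using T unfolding t1_space_def by simp
      then obtain V where V: "openin (pi_top m) V" "A \<in> V" "B \<notin> V"
        using AB \<open>A \<noteq> B\<close> by blast
      then obtain n where "D n \<subseteq> A" "pi_set m \<inter> checkD n \<subseteq> V" unfolding pi_open by blast
      then show False using AB V by (auto simp: checkD_def)
    qed
  qed
next
  assume R: "\<forall>A\<in>pi_set m. \<forall>B\<in>pi_set m. A \<subseteq> B \<longrightarrow> A = B"
  show "t1_space (pi_top m)"
    unfolding t1_space_def
  proof (intro ballI impI)
    fix A B assume AB: "A \<in> topspace (pi_top m)" "B \<in> topspace (pi_top m)" "A \<noteq> B"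
    have "\<not> A \<subseteq> B" using R AB by auto
    then obtain x where x: "x \<in> A" "x \<notin> B" by blast
    obtain k where k: "D k = {x}" using D_single by blast
    have "A \<in> checkD k" "B \<notin> checkD k" using x k by (simp_all add: checkD_def)
    then show "\<exists>U. openin (pi_top m) U \<and> A \<in> U \<and> B \<notin> U"
      using basic_open[of m k] AB by (intro exI[of _ "pi_set m \<inter> checkD k"]) auto
  qed
qed

lemma Hausdorff_char: "Hausdorff_space (pi_top m) \<longleftrightarrow>
  (\<forall>A\<in>pi_set m. \<forall>B\<in>pi_set m. A \<noteq> B \<longrightarrow>
     (\<exists>n1 n2. D n1 \<subseteq> A \<and> D n2 \<subseteq> B \<and> \<not> (\<exists>C\<in>pi_set m. D n1 \<subseteq> C \<and> D n2 \<subseteq> C)))"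
proof
  assume H: "Hausdorff_space (pi_top m)"
  show "\<forall>A\<in>pi_set m. \<forall>B\<in>pi_set m. A \<noteq> B \<longrightarrow>
     (\<exists>n1 n2. D n1 \<subseteq> A \<and> D n2 \<subseteq> B \<and> \<not> (\<exists>C\<in>pi_set m. D n1 \<subseteq> C \<and> D n2 \<subseteq> C))"
  proof (intro ballI impI)
    fix A B assume AB: "A \<in> pi_set m" "B \<in> pi_set m" "A \<noteq> B"
    have "\<forall>x y. x \<in> pi_set m \<and> y \<in> pi_set m \<and> x \<noteq> y \<longrightarrow>
      (\<exists>U V. openin (pi_top m) U \<and> openin (pi_top m) V \<and> x \<in> U \<and> y \<in> V \<and> disjnt U V)"
      using H unfolding Hausdorff_space_def by simp
    then obtain U V where UV: "openin (pi_top m) U" "openin (pi_top m) V" "A \<in> U" "B \<in> V" "disjnt U V"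
      using AB by blast
    obtain n1 where n1: "D n1 \<subseteq> A" "pi_set m \<inter> checkD n1 \<subseteq> U" using UV unfolding pi_open by blast
    obtain n2 where n2: "D n2 \<subseteq> B" "pi_set m \<inter> checkD n2 \<subseteq> V" using UV unfolding pi_open by blast
    show "\<exists>n1 n2. D n1 \<subseteq> A \<and> D n2 \<subseteq> B \<and> \<not> (\<exists>C\<in>pi_set m. D n1 \<subseteq> C \<and> D n2 \<subseteq> C)"
      using n1 n2 UV(5) by (intro exI[of _ n1] exI[of _ n2]) (auto simp: checkD_def disjnt_def)
  qed
next
  assume R: "\<forall>A\<in>pi_set m. \<forall>B\<in>pi_set m. A \<noteq> B \<longrightarrow>
     (\<exists>n1 n2. D n1 \<subseteq> A \<and> D n2 \<subseteq> B \<and> \<not> (\<exists>C\<in>pi_set m. D n1 \<subseteq> C \<and> D n2 \<subseteq> C))"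
  show "Hausdorff_space (pi_top m)"
    unfolding Hausdorff_space_def
  proof (intro allI impI)
    fix A B assume AB: "A \<in> topspace (pi_top m) \<and> B \<in> topspace (pi_top m) \<and> A \<noteq> B"
    then have "A \<in> pi_set m" "B \<in> pi_set m" "A \<noteq> B" by simp_all
    from R[rule_format, OF this] obtain n1 n2 where n: "D n1 \<subseteq> A" "D n2 \<subseteq> B" "\<not> (\<exists>C\<in>pi_set m. D n1 \<subseteq> C \<and> D n2 \<subseteq> C)"
      by blast
    show "\<exists>U V. openin (pi_top m) U \<and> openin (pi_top m) V \<and> A \<in> U \<and> B \<in> V \<and> disjnt U V"
      by (rule exI[of _ "pi_set m \<inter> checkD n1"], rule exI[of _ "pi_set m \<inter> checkD n2"])
         (use AB n basic_open in \<open>auto simp: checkD_def disjnt_def\<close>)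
  qed
qed

lemma closure_char: "B \<in> pi_top m closure_of (pi_set m \<inter> checkD k) \<longleftrightarrow>
   B \<in> pi_set m \<and> (\<forall>j. D j \<subseteq> B \<longrightarrow> (\<exists>C\<in>pi_set m. D j \<subseteq> C \<and> D k \<subseteq> C))"
proof
  assume B: "B \<in> pi_top m closure_of (pi_set m \<inter> checkD k)"
  then have "B \<in> pi_set m" using closure_of_subset_topspace by fastforce
  moreover have "\<exists>C\<in>pi_set m. D j \<subseteq> C \<and> D k \<subseteq> C" if "D j \<subseteq> B" for j
  proof -
    have "B \<in> pi_set m \<inter> checkD j" using that \<open>B \<in> pi_set m\<close> by (simp add: checkD_def)
    then obtain y where "y \<in> pi_set m \<inter> checkD k" "y \<in> pi_set m \<inter> checkD j"
      using B basic_open unfolding in_closure_of by metis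
    then show ?thesis by (auto simp: checkD_def)
  qed
  ultimately show "B \<in> pi_set m \<and> (\<forall>j. D j \<subseteq> B \<longrightarrow> (\<exists>C\<in>pi_set m. D j \<subseteq> C \<and> D k \<subseteq> C))" by blast
next
  assume R: "B \<in> pi_set m \<and> (\<forall>j. D j \<subseteq> B \<longrightarrow> (\<exists>C\<in>pi_set m. D j \<subseteq> C \<and> D k \<subseteq> C))"
  show "B \<in> pi_top m closure_of (pi_set m \<inter> checkD k)"
    unfolding in_closure_of
  proof (intro conjI allI impI)
    show "B \<in> topspace (pi_top m)" using R by simp
    fix T assume T: "B \<in> T \<and> openin (pi_top m) T"
    then obtain j where j: "D j \<subseteq> B" "pi_set m \<inter> checkD j \<subseteq> T" unfolding pi_open by blast
    then obtain C where "C \<in> pi_set m" "D j \<subseteq> C" "D k \<subseteq> C" using R by blast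
    then show "\<exists>y. y \<in> pi_set m \<inter> checkD k \<and> y \<in> T" using j by (auto simp: checkD_def)
  qed
qed

lemma regular_char: "regular_space (pi_top m) \<longleftrightarrow>
  (\<forall>A\<in>pi_set m. \<forall>n. D n \<subseteq> A \<longrightarrow> (\<exists>k. D k \<subseteq> A \<and>
     (\<forall>B\<in>pi_set m. \<not> D n \<subseteq> B \<longrightarrow> (\<exists>j. D j \<subseteq> B \<and> \<not> (\<exists>C\<in>pi_set m. D j \<subseteq> C \<and> D k \<subseteq> C)))))"
  (is "_ \<longleftrightarrow> ?R")
proof
  assume reg: "regular_space (pi_top m)"
  have nb: "\<And>W x. openin (pi_top m) W \<Longrightarrow> x \<in> W \<Longrightarrow>
     (\<exists>U V. openin (pi_top m) U \<and> closedin (pi_top m) V \<and> x \<in> U \<and> U \<subseteq> V \<and> V \<subseteq> W)"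
    using reg unfolding neighbourhood_base_of_closedin[symmetric] neighbourhood_base_of by blast
  show ?R
  proof (intro ballI allI impI)
    fix A n assume A: "A \<in> pi_set m" "D n \<subseteq> A"
    have "A \<in> pi_set m \<inter> checkD n" using A by (simp add: checkD_def)
    from nb[OF basic_open this] obtain U V where UV: "openin (pi_top m) U" "closedin (pi_top m) V" "A \<in> U" "U \<subseteq> V"
        "V \<subseteq> pi_set m \<inter> checkD n" by blast
    from UV(1,3) obtain k where k: "D k \<subseteq> A" "pi_set m \<inter> checkD k \<subseteq> U" unfolding pi_open by blast
    have "pi_set m \<inter> checkD k \<subseteq> V" using k(2) UV(4) by (rule order_trans)
    then have cl: "pi_top m closure_of (pi_set m \<inter> checkD k) \<subseteq> V"
      using UV(2) by (rule closure_of_minimal)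
    show "\<exists>k. D k \<subseteq> A \<and> (\<forall>B\<in>pi_set m. \<not> D n \<subseteq> B \<longrightarrow> (\<exists>j. D j \<subseteq> B \<and> \<not> (\<exists>C\<in>pi_set m. D j \<subseteq> C \<and> D k \<subseteq> C)))"
    proof (rule exI[of _ k], rule conjI[OF k(1)], intro ballI impI)
      fix B assume B: "B \<in> pi_set m" "\<not> D n \<subseteq> B"
      have "B \<notin> pi_set m \<inter> checkD n" using B(2) by (simp add: checkD_def)
      then have "B \<notin> pi_top m closure_of (pi_set m \<inter> checkD k)"
        using cl UV(5) by blast
      then show "\<exists>j. D j \<subseteq> B \<and> \<not> (\<exists>C\<in>pi_set m. D j \<subseteq> C \<and> D k \<subseteq> C)"
        using B(1) unfolding closure_char by blast
    qed
  qed
next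
  assume R: ?R
  show "regular_space (pi_top m)"
    unfolding neighbourhood_base_of_closedin[symmetric] neighbourhood_base_of
  proof (intro allI impI)
    fix W A assume WA: "openin (pi_top m) W \<and> A \<in> W"
    then obtain n where n: "D n \<subseteq> A" "pi_set m \<inter> checkD n \<subseteq> W" unfolding pi_open by blast
    have A: "A \<in> pi_set m" using WA unfolding pi_open by blast
    from R[rule_format, OF A n(1)] obtain k where k: "D k \<subseteq> A"
      "\<forall>B\<in>pi_set m. \<not> D n \<subseteq> B \<longrightarrow> (\<exists>j. D j \<subseteq> B \<and> \<not> (\<exists>C\<in>pi_set m. D j \<subseteq> C \<and> D k \<subseteq> C))"
      by blast
    let ?U = "pi_set m \<inter> checkD k"
    let ?V = "pi_top m closure_of ?U"
    have "?V \<subseteq> pi_set m \<inter> checkD n"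
    proof
      fix B assume "B \<in> ?V"
      then have B: "B \<in> pi_set m" "\<forall>j. D j \<subseteq> B \<longrightarrow> (\<exists>C\<in>pi_set m. D j \<subseteq> C \<and> D k \<subseteq> C)"
        unfolding closure_char by blast+
      have "D n \<subseteq> B"
      proof (rule ccontr)
        assume "\<not> D n \<subseteq> B"
        from k(2)[rule_format, OF B(1) this] obtain j where "D j \<subseteq> B" "\<not> (\<exists>C\<in>pi_set m. D j \<subseteq> C \<and> D k \<subseteq> C)"
          by blast
        then show False using B(2) by blast
      qed
      then show "B \<in> pi_set m \<inter> checkD n" using B(1) by (simp add: checkD_def)
    qed
    then have VW: "?V \<subseteq> W" using n(2) by (rule order_trans)
    have UV: "?U \<subseteq> ?V" by (rule closure_of_subset) simp
    have AU: "A \<in> ?U" using A k(1) by (simp add: checkD_def)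
    show "\<exists>U V. openin (pi_top m) U \<and> closedin (pi_top m) V \<and> A \<in> U \<and> U \<subseteq> V \<and> V \<subseteq> W"
      by (rule exI[of _ ?U], rule exI[of _ ?V]) (intro conjI basic_open closedin_closure_of AU UV VW)
  qed
qed

lemma t0_pi: "t0_space (pi_top m)"
  unfolding t0_space_def
proof (intro ballI impI)
  fix A B assume AB: "A \<in> topspace (pi_top m)" "B \<in> topspace (pi_top m)" "A \<noteq> B"
  show "\<exists>U. openin (pi_top m) U \<and> (A \<notin> U) = (B \<in> U)"
  proof (cases "A \<subseteq> B")
    case True
    then obtain x where x: "x \<in> B" "x \<notin> A" using AB by blast
    obtain k where k: "D k = {x}" using D_single by blast
    have "A \<notin> checkD k" "B \<in> checkD k" using x k by (simp_all add: checkD_def)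
    then have "(A \<notin> pi_set m \<inter> checkD k) = (B \<in> pi_set m \<inter> checkD k)" using AB by simp
    then show ?thesis using basic_open by blast
  next
    case False
    then obtain x where x: "x \<in> A" "x \<notin> B" by blast
    obtain k where k: "D k = {x}" using D_single by blast
    have "A \<in> checkD k" "B \<notin> checkD k" using x k by (simp_all add: checkD_def)
    then have "(A \<notin> pi_set m \<inter> checkD k) = (B \<in> pi_set m \<inter> checkD k)" using AB by simp
    then show ?thesis using basic_open by blast
  qed
qed

lemma second_countable_pi: "second_countable (pi_top m)"
  unfolding second_countable_def
proof (intro exI conjI)
  show "countable (range (\<lambda>k. pi_set m \<inter> checkD k))" by simp
  show "\<forall>V\<in>range (\<lambda>k. pi_set m \<inter> checkD k). openin (pi_top m) V" using basic_open by blast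
  show "\<forall>U x. openin (pi_top m) U \<and> x \<in> U \<longrightarrow> (\<exists>V\<in>range (\<lambda>k. pi_set m \<inter> checkD k). x \<in> V \<and> V \<subseteq> U)"
  proof (intro allI impI)
    fix U x assume Ux: "openin (pi_top m) U \<and> x \<in> U"
    then obtain n where "D n \<subseteq> x" "pi_set m \<inter> checkD n \<subseteq> U" unfolding pi_open by blast
    moreover have "x \<in> pi_set m" using Ux openin_subset by fastforce
    ultimately show "\<exists>V\<in>range (\<lambda>k. pi_set m \<inter> checkD k). x \<in> V \<and> V \<subseteq> U"
      by (auto simp: checkD_def)
  qed
qed

lemma metrization:
  fixes X :: "'a topology"
  assumes reg: "regular_space X" and sc: "second_countable X" and t0: "t0_space X"
  shows "metrizable_space X"
proof (cases "topspace X = {}")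
  case True
  then show ?thesis by (simp add: empty_metrizable_space)
next
  case ne: False
  have H: "Hausdorff_space X" using reg t0 regular_t0_imp_Hausdorff_space by blast
  have T1: "t1_space X" using H Hausdorff_imp_t1_space by blast
  have "hereditarily normal_space X"
    using reg sc regular_second_countable_imp_hereditarily_normal_space by blast
  then have nor: "normal_space X"
    unfolding hereditarily_def by (metis order_refl subtopology_topspace)
  obtain \<B> where B: "countable \<B>" "\<And>V. V \<in> \<B> \<Longrightarrow> openin X V"
    "\<And>U x. openin X U \<Longrightarrow> x \<in> U \<Longrightarrow> \<exists>V \<in> \<B>. x \<in> V \<and> V \<subseteq> U"
    using sc unfolding second_countable_def by metis
  have nb: "\<And>W x. openin X W \<Longrightarrow> x \<in> W \<Longrightarrow>
     (\<exists>U V. openin X U \<and> closedin X V \<and> x \<in> U \<and> U \<subseteq> V \<and> V \<subseteq> W)"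
    using reg unfolding neighbourhood_base_of_closedin[symmetric] neighbourhood_base_of by blast
  define P where "P = {p \<in> \<B> \<times> \<B>. X closure_of (fst p) \<subseteq> snd p}"
  have cP: "countable P" unfolding P_def using B(1)
    by (metis (no_types, lifting) countable_SIGMA countable_subset mem_Collect_eq subsetI)
  have Pgood: "\<exists>p\<in>P. x \<in> fst p \<and> snd p \<subseteq> U" if U: "openin X U" "x \<in> U" for U x
  proof -
    obtain B2 where B2: "B2 \<in> \<B>" "x \<in> B2" "B2 \<subseteq> U" using B(3)[OF U] by blast
    obtain U' V where UV: "openin X U'" "closedin X V" "x \<in> U'" "U' \<subseteq> V" "V \<subseteq> B2"
      using nb[OF B(2)[OF B2(1)] B2(2)] by blast
    obtain B1 where B1: "B1 \<in> \<B>" "x \<in> B1" "B1 \<subseteq> U'" using B(3)[OF UV(1,3)] by blast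
    have "X closure_of B1 \<subseteq> V" using B1(3) UV(4) UV(2) by (meson closure_of_minimal order_trans)
    then have "(B1, B2) \<in> P" unfolding P_def using B1 B2 UV by auto
    then show ?thesis using B1 B2 by force
  qed
  have Urys: "\<exists>f. continuous_map X (top_of_set {0..1::real}) f \<and> f ` (topspace X - snd p) \<subseteq> {0}
                 \<and> f ` (X closure_of (fst p)) \<subseteq> {1}" if p: "p \<in> P" for p
  proof -
    have "closedin X (topspace X - snd p)" using p B(2) unfolding P_def by auto
    moreover have "disjnt (topspace X - snd p) (X closure_of (fst p))"
      using p unfolding P_def disjnt_def by auto
    ultimately obtain f where "continuous_map X (top_of_set {0..1::real}) f" "f ` (topspace X - snd p) \<subseteq> {0}"
       "f ` (X closure_of (fst p)) \<subseteq> {1}"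
      using Urysohn_lemma[OF nor _ closedin_closure_of, of "topspace X - snd p" "fst p" 0 1] by auto
    then show ?thesis by blast
  qed
  define F where "F p = (SOME f. continuous_map X (top_of_set {0..1::real}) f \<and> f ` (topspace X - snd p) \<subseteq> {0}
                 \<and> f ` (X closure_of (fst p)) \<subseteq> {1})" for p
  have F: "continuous_map X (top_of_set {0..1::real}) (F p) \<and> F p ` (topspace X - snd p) \<subseteq> {0}
                 \<and> F p ` (X closure_of (fst p)) \<subseteq> {1}" if "p \<in> P" for p
    unfolding F_def by (rule someI_ex[OF Urys[OF that]])
  obtain x0 where "x0 \<in> topspace X" using ne by blast
  then have Pne: "P \<noteq> {}" using Pgood[of "topspace X" x0] by auto
  define g where "g n = F (from_nat_into P n)" for n
  have gc: "continuous_map X (top_of_set {0..1::real}) (g n)" for n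
    using F[OF from_nat_into[OF Pne]] unfolding g_def by blast
  have gsep: "\<exists>n. g n x = 1 \<and> (\<forall>y\<in>topspace X - U. g n y = 0)" if U: "openin X U" "x \<in> U" for U x
  proof -
    obtain p where p: "p \<in> P" "x \<in> fst p" "snd p \<subseteq> U" using Pgood[OF U] by blast
    obtain n where n: "from_nat_into P n = p" using from_nat_into_surj[OF cP p(1)] by blast
    have "fst p \<in> \<B>" using p(1) unfolding P_def by auto
    then have "fst p \<subseteq> topspace X" using B(2) openin_subset by blast
    then have "x \<in> X closure_of (fst p)" using p(2) closure_of_subset by blast
    then have "g n x = 1" using F[OF p(1)] n unfolding g_def by blast
    moreover have "g n y = 0" if "y \<in> topspace X - U" for y
      using F[OF p(1)] n that p(3) unfolding g_def by blast
    ultimately show ?thesis by blast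
  qed
  define Y where "Y = product_topology (\<lambda>n::nat. top_of_set {0..1::real}) UNIV"
  define e where "e x = (\<lambda>n. g n x)" for x
  define Y' where "Y' = subtopology Y (e ` topspace X)"
  have metY: "metrizable_space Y"
    unfolding Y_def metrizable_space_product_topology
    by (simp add: metrizable_space_subtopology metrizable_space_euclidean)
  have ce: "continuous_map X Y e"
    unfolding Y_def e_def continuous_map_componentwise_UNIV using gc by simp
  then have ce': "continuous_map X Y' e"
    unfolding Y'_def by (simp add: continuous_map_in_subtopology)
  have proj: "continuous_map Y euclideanreal (\<lambda>z. z n)" for n
    unfolding Y_def using continuous_map_product_projection[of n UNIV "\<lambda>n::nat. top_of_set {0..1::real}"]
    by (simp add: continuous_map_in_subtopology)
  have inj: "inj_on e (topspace X)"
  proof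
    fix x y assume xy: "x \<in> topspace X" "y \<in> topspace X" "e x = e y"
    show "x = y"
    proof (rule ccontr)
      assume "x \<noteq> y"
      have "openin X (topspace X - {y})" using closedin_t1_singleton[OF T1 xy(2)] by blast
      then obtain n where "g n x = 1" "\<forall>z\<in>topspace X - (topspace X - {y}). g n z = 0"
        using gsep[of "topspace X - {y}" x] xy(1) \<open>x \<noteq> y\<close> by blast
      then have "g n x \<noteq> g n y" using xy(2) by simp
      then show False using xy(3) unfolding e_def by meson
    qed
  qed
  have om: "open_map X Y' e"
    unfolding open_map_def
  proof (intro allI impI)
    fix U assume U: "openin X U"
    have "\<forall>x\<in>U. \<exists>n. g n x = 1 \<and> (\<forall>y\<in>topspace X - U. g n y = 0)" using gsep U by blast
    then obtain N where N: "\<And>x. x \<in> U \<Longrightarrow> g (N x) x = 1 \<and> (\<forall>y\<in>topspace X - U. g (N x) y = 0)"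
      by metis
    have oW1: "openin Y {z \<in> topspace Y. 0 < z n}" for n
    proof -
      have "openin euclideanreal {0<..}" by (metis open_greaterThan open_openin)
      from openin_continuous_map_preimage[OF proj this] show ?thesis by simp
    qed
    define W where "W = (\<Union>x\<in>U. {z \<in> topspace Y. 0 < z (N x)})"
    have oW: "openin Y W" unfolding W_def
      by (intro openin_Union) (auto intro: oW1)
    have "e ` U = W \<inter> e ` topspace X"
    proof
      show "e ` U \<subseteq> W \<inter> e ` topspace X"
      proof
        fix z assume "z \<in> e ` U"
        then obtain x where x: "x \<in> U" "z = e x" by blast
        have "x \<in> topspace X" using U x(1) openin_subset by blast
        then have "e x \<in> topspace Y" using ce continuous_map_def by fastforce
        moreover have "0 < e x (N x)" using N[OF x(1)] unfolding e_def by simp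
        ultimately have "e x \<in> W" unfolding W_def using x(1) by blast
        then show "z \<in> W \<inter> e ` topspace X" using x \<open>x \<in> topspace X\<close> by blast
      qed
      show "W \<inter> e ` topspace X \<subseteq> e ` U"
      proof
        fix z assume z: "z \<in> W \<inter> e ` topspace X"
        then obtain y x where y: "y \<in> topspace X" "z = e y" and x: "x \<in> U" "z (N x) > 0"
          unfolding W_def by auto
        have "y \<in> U"
        proof (rule ccontr)
          assume "y \<notin> U"
          then have "g (N x) y = 0" using N[OF x(1)] y(1) by blast
          then show False using x(2) y(2) unfolding e_def by simp
        qed
        then show "z \<in> e ` U" using y by blast
      qed
    qed
    then show "openin Y' (e ` U)" unfolding Y'_def openin_subtopology using oW by blast
  qed
  have "embedding_map X Y' e"
    by (rule injective_open_imp_embedding_map[OF ce' om inj])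
  then have "X homeomorphic_space subtopology Y' (e ` topspace X)"
    by (rule embedding_map_imp_homeomorphic_space)
  moreover have "metrizable_space (subtopology Y' (e ` topspace X))"
    unfolding Y'_def by (intro metrizable_space_subtopology metY)
  ultimately show ?thesis using homeomorphic_metrizable_space by blast
qed

lemma Good_cong:
  assumes "R 0 = R' 0" "R 1 = R' 1" "R 2 = R' 2" "R 3 = R' 3" "R 4 = R' 4" "R 5 = R' 5"
  shows "Good R = Good R'"
  unfolding Good_def GLk_def GVt_def GTr_def GD0_def GS1_def GBt_def by (simp only: assms)

lemma Good_ext: "Good (\<lambda>j. if j \<le> 5 then R0 j else f j)"
proof -
  have "Good (\<lambda>j. if j \<le> 5 then R0 j else f j) = Good R0"
    by (rule Good_cong) simp_all
  then show ?thesis using Good_R0 by simp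
qed

lemma ar_Good': "ar (\<lambda>e X. Good (\<lambda>j y. prod_encode (j, y) \<in> X))"
  by (rule ar_Good)

definition Phi1 :: "nat \<Rightarrow> (nat \<Rightarrow> nat \<Rightarrow> bool) \<Rightarrow> bool" where
  "Phi1 m R \<longleftrightarrow> (Good R \<longrightarrow> (inS R m (R 10) \<and> inS R m (R 11) \<and> (\<forall>x. R 10 x \<longrightarrow> R 11 x) \<longrightarrow> (\<forall>x. R 11 x \<longrightarrow> R 10 x)))"

lemma Phi1_ok: "t1_space (pi_top m) \<longleftrightarrow> (\<forall>R. Phi1 m R)"
proof
  assume T: "t1_space (pi_top m)"
  show "\<forall>R. Phi1 m R" unfolding Phi1_def
  proof (intro allI impI)
    fix R x assume G: "Good R" and H: "inS R m (R 10) \<and> inS R m (R 11) \<and> (\<forall>x. R 10 x \<longrightarrow> R 11 x)" and x: "R 11 x"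
    have "Collect (R 10) \<in> pi_set m" "Collect (R 11) \<in> pi_set m" "Collect (R 10) \<subseteq> Collect (R 11)"
      using H inS_ok[OF G] by auto
    then have "Collect (R 10) = Collect (R 11)" using T unfolding t1_char by blast
    then show "R 10 x" using x by auto
  qed
next
  assume P: "\<forall>R. Phi1 m R"
  show "t1_space (pi_top m)" unfolding t1_char
  proof (intro ballI impI)
    fix A B assume AB: "A \<in> pi_set m" "B \<in> pi_set m" "A \<subseteq> B"
    define R where "R = (\<lambda>j. if j \<le> 5 then R0 j else if j = 10 then (\<lambda>y. y \<in> A) else (\<lambda>y. y \<in> B))"
    have G: "Good R" unfolding R_def by (rule Good_ext)
    have R10: "R 10 = (\<lambda>y. y \<in> A)" and R11: "R 11 = (\<lambda>y. y \<in> B)" unfolding R_def by simp_all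
    have "inS R m (R 10)" "inS R m (R 11)" using AB inS_ok[OF G] by (simp_all add: R10 R11)
    moreover have "\<forall>x. R 10 x \<longrightarrow> R 11 x" using AB(3) by (auto simp: R10 R11)
    moreover have "Phi1 m R" using P by blast
    ultimately have "\<forall>x. R 11 x \<longrightarrow> R 10 x" using G unfolding Phi1_def by blast
    then show "A = B" using AB(3) by (auto simp: R10 R11)
  qed
qed

lemma Pi11_t1: "Pi11 {m. t1_space (pi_top m)}"
proof (rule Pi11I[where Phi=Phi1])
  show "ar (\<lambda>e X. Phi1 (e 0) (\<lambda>j y. pe j y \<in> X))"
    unfolding Phi1_def inS_def inU_def Dsub_def by (intro ar_intros df_intros ar_Good')
  show "\<And>m. m \<in> {m. t1_space (pi_top m)} \<longleftrightarrow> (\<forall>R. Phi1 m R)" using Phi1_ok by simp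
qed


definition Phi2 :: "nat \<Rightarrow> (nat \<Rightarrow> nat \<Rightarrow> bool) \<Rightarrow> bool" where
  "Phi2 m R \<longleftrightarrow> (Good R \<longrightarrow> (inS R m (R 10) \<and> inS R m (R 11) \<and> \<not> (\<forall>x. R 10 x = R 11 x) \<longrightarrow>
     (\<exists>n1 n2. Dsub R n1 (R 10) \<and> Dsub R n2 (R 11) \<and>
        \<not> (inS R m (\<lambda>x. R 12 (pe (pe n1 n2) x)) \<and> Dsub R n1 (\<lambda>x. R 12 (pe (pe n1 n2) x)) \<and>
             Dsub R n2 (\<lambda>x. R 12 (pe (pe n1 n2) x))))))"

lemma Phi2_ok: "Hausdorff_space (pi_top m) \<longleftrightarrow> (\<forall>R. Phi2 m R)"
proof
  assume T: "Hausdorff_space (pi_top m)"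
  show "\<forall>R. Phi2 m R" unfolding Phi2_def
  proof (intro allI impI)
    fix R assume G: "Good R" and H: "inS R m (R 10) \<and> inS R m (R 11) \<and> \<not> (\<forall>x. R 10 x = R 11 x)"
    have AB: "Collect (R 10) \<in> pi_set m" "Collect (R 11) \<in> pi_set m" "Collect (R 10) \<noteq> Collect (R 11)"
      using H inS_ok[OF G] by auto
    from T[unfolded Hausdorff_char, rule_format, OF AB] obtain n1 n2 where
      n: "D n1 \<subseteq> Collect (R 10)" "D n2 \<subseteq> Collect (R 11)"
         "\<not> (\<exists>C\<in>pi_set m. D n1 \<subseteq> C \<and> D n2 \<subseteq> C)" by blast
    let ?C = "Collect (\<lambda>x. R 12 (pe (pe n1 n2) x))"
    have "\<not> (?C \<in> pi_set m \<and> D n1 \<subseteq> ?C \<and> D n2 \<subseteq> ?C)" using n(3) by blast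
    then show "\<exists>n1 n2. Dsub R n1 (R 10) \<and> Dsub R n2 (R 11) \<and>
        \<not> (inS R m (\<lambda>x. R 12 (pe (pe n1 n2) x)) \<and> Dsub R n1 (\<lambda>x. R 12 (pe (pe n1 n2) x)) \<and>
             Dsub R n2 (\<lambda>x. R 12 (pe (pe n1 n2) x)))"
      using n(1,2) by (intro exI[of _ n1] exI[of _ n2]) (simp add: inS_ok[OF G] Dsub_ok[OF G])
  qed
next
  assume P: "\<forall>R. Phi2 m R"
  show "Hausdorff_space (pi_top m)" unfolding Hausdorff_char
  proof (intro ballI impI)
    fix A B assume AB: "A \<in> pi_set m" "B \<in> pi_set m" "A \<noteq> B"
    define Cf where "Cf n1 n2 = (SOME C. C \<in> pi_set m \<and> D n1 \<subseteq> C \<and> D n2 \<subseteq> C)" for n1 n2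
    define R where "R = (\<lambda>j. if j \<le> 5 then R0 j else if j = 10 then (\<lambda>y. y \<in> A) else if j = 11 then (\<lambda>y. y \<in> B)
       else (\<lambda>y. snd (prod_decode y) \<in> Cf (fst (prod_decode (fst (prod_decode y)))) (snd (prod_decode (fst (prod_decode y))))))"
    have G: "Good R" unfolding R_def by (rule Good_ext)
    have R10: "R 10 = (\<lambda>y. y \<in> A)" and R11: "R 11 = (\<lambda>y. y \<in> B)"
      and R12: "\<And>n1 n2 x. R 12 (pe (pe n1 n2) x) = (x \<in> Cf n1 n2)" unfolding R_def by simp_all
    have "inS R m (R 10)" "inS R m (R 11)" using AB inS_ok[OF G] by (simp_all add: R10 R11)
    moreover have "\<not> (\<forall>x. R 10 x = R 11 x)" using AB(3) by (auto simp: R10 R11)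
    moreover have "Phi2 m R" using P by blast
    ultimately obtain n1 n2 where n: "Dsub R n1 (R 10)" "Dsub R n2 (R 11)"
        "\<not> (inS R m (\<lambda>x. R 12 (pe (pe n1 n2) x)) \<and> Dsub R n1 (\<lambda>x. R 12 (pe (pe n1 n2) x)) \<and>
             Dsub R n2 (\<lambda>x. R 12 (pe (pe n1 n2) x)))"
      using G unfolding Phi2_def by blast
    have n': "D n1 \<subseteq> A" "D n2 \<subseteq> B" "\<not> (Cf n1 n2 \<in> pi_set m \<and> D n1 \<subseteq> Cf n1 n2 \<and> D n2 \<subseteq> Cf n1 n2)"
      using n by (simp_all add: inS_ok[OF G] Dsub_ok[OF G] R10 R11 R12)
    have "\<not> (\<exists>C\<in>pi_set m. D n1 \<subseteq> C \<and> D n2 \<subseteq> C)"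
    proof
      assume "\<exists>C\<in>pi_set m. D n1 \<subseteq> C \<and> D n2 \<subseteq> C"
      then obtain C where "C \<in> pi_set m \<and> D n1 \<subseteq> C \<and> D n2 \<subseteq> C" by blast
      then have "Cf n1 n2 \<in> pi_set m \<and> D n1 \<subseteq> Cf n1 n2 \<and> D n2 \<subseteq> Cf n1 n2"
        unfolding Cf_def by (rule someI)
      then show False using n'(3) by blast
    qed
    then show "\<exists>n1 n2. D n1 \<subseteq> A \<and> D n2 \<subseteq> B \<and> \<not> (\<exists>C\<in>pi_set m. D n1 \<subseteq> C \<and> D n2 \<subseteq> C)"
      using n'(1,2) by blast
  qed
qed

lemma Pi11_Hausdorff: "Pi11 {m. Hausdorff_space (pi_top m)}"
proof (rule Pi11I[where Phi=Phi2])
  show "ar (\<lambda>e X. Phi2 (e 0) (\<lambda>j y. pe j y \<in> X))"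
    unfolding Phi2_def inS_def inU_def Dsub_def by (intro ar_intros df_intros ar_Good')
  show "\<And>m. m \<in> {m. Hausdorff_space (pi_top m)} \<longleftrightarrow> (\<forall>R. Phi2 m R)" using Phi2_ok by simp
qed


definition Phi3 :: "nat \<Rightarrow> (nat \<Rightarrow> nat \<Rightarrow> bool) \<Rightarrow> bool" where
  "Phi3 m R \<longleftrightarrow> (Good R \<longrightarrow> inS R m (R 10) \<longrightarrow> (\<forall>n. Dsub R n (R 10) \<longrightarrow>
     (\<exists>k. Dsub R k (R 10) \<and>
        (inS R m (\<lambda>x. R 11 (pe k x)) \<and> \<not> Dsub R n (\<lambda>x. R 11 (pe k x)) \<longrightarrow>
          (\<exists>j. Dsub R j (\<lambda>x. R 11 (pe k x)) \<and>
             \<not> (inS R m (\<lambda>x. R 12 (pe (pe k j) x)) \<and> Dsub R j (\<lambda>x. R 12 (pe (pe k j) x)) \<and>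
                  Dsub R k (\<lambda>x. R 12 (pe (pe k j) x))))))))"

lemma Phi3_ok: "regular_space (pi_top m) \<longleftrightarrow> (\<forall>R. Phi3 m R)"
proof
  assume T: "regular_space (pi_top m)"
  show "\<forall>R. Phi3 m R" unfolding Phi3_def
  proof (intro allI impI)
    fix R n assume G: "Good R" and A: "inS R m (R 10)" and n: "Dsub R n (R 10)"
    have A': "Collect (R 10) \<in> pi_set m" "D n \<subseteq> Collect (R 10)"
      using A n inS_ok[OF G] Dsub_ok[OF G] by auto
    from T[unfolded regular_char, rule_format, OF A'] obtain k where
      k: "D k \<subseteq> Collect (R 10)"
      "\<forall>B\<in>pi_set m. \<not> D n \<subseteq> B \<longrightarrow> (\<exists>j. D j \<subseteq> B \<and> \<not> (\<exists>C\<in>pi_set m. D j \<subseteq> C \<and> D k \<subseteq> C))"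
      by blast
    show "\<exists>k. Dsub R k (R 10) \<and>
        (inS R m (\<lambda>x. R 11 (pe k x)) \<and> \<not> Dsub R n (\<lambda>x. R 11 (pe k x)) \<longrightarrow>
          (\<exists>j. Dsub R j (\<lambda>x. R 11 (pe k x)) \<and>
             \<not> (inS R m (\<lambda>x. R 12 (pe (pe k j) x)) \<and> Dsub R j (\<lambda>x. R 12 (pe (pe k j) x)) \<and>
                  Dsub R k (\<lambda>x. R 12 (pe (pe k j) x)))))"
    proof (rule exI[of _ k], intro conjI impI)
      show "Dsub R k (R 10)" using k(1) Dsub_ok[OF G] by simp
      assume B: "inS R m (\<lambda>x. R 11 (pe k x)) \<and> \<not> Dsub R n (\<lambda>x. R 11 (pe k x))"
      have B': "Collect (\<lambda>x. R 11 (pe k x)) \<in> pi_set m" "\<not> D n \<subseteq> Collect (\<lambda>x. R 11 (pe k x))"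
        using B inS_ok[OF G] Dsub_ok[OF G] by auto
      from k(2)[rule_format, OF B'] obtain j where
        j: "D j \<subseteq> Collect (\<lambda>x. R 11 (pe k x))" "\<not> (\<exists>C\<in>pi_set m. D j \<subseteq> C \<and> D k \<subseteq> C)" by blast
      let ?C = "Collect (\<lambda>x. R 12 (pe (pe k j) x))"
      have "\<not> (?C \<in> pi_set m \<and> D j \<subseteq> ?C \<and> D k \<subseteq> ?C)" using j(2) by blast
      then show "\<exists>j. Dsub R j (\<lambda>x. R 11 (pe k x)) \<and>
             \<not> (inS R m (\<lambda>x. R 12 (pe (pe k j) x)) \<and> Dsub R j (\<lambda>x. R 12 (pe (pe k j) x)) \<and>
                  Dsub R k (\<lambda>x. R 12 (pe (pe k j) x)))"
        using j(1) by (intro exI[of _ j]) (simp add: inS_ok[OF G] Dsub_ok[OF G])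
    qed
  qed
next
  assume P: "\<forall>R. Phi3 m R"
  show "regular_space (pi_top m)" unfolding regular_char
  proof (intro ballI allI impI)
    fix A n assume A: "A \<in> pi_set m" "D n \<subseteq> A"
    show "\<exists>k. D k \<subseteq> A \<and> (\<forall>B\<in>pi_set m. \<not> D n \<subseteq> B \<longrightarrow> (\<exists>j. D j \<subseteq> B \<and> \<not> (\<exists>C\<in>pi_set m. D j \<subseteq> C \<and> D k \<subseteq> C)))"
    proof (rule ccontr)
      assume neg: "\<not> ?thesis"
      have ex: "\<exists>B. B \<in> pi_set m \<and> \<not> D n \<subseteq> B \<and> (\<forall>j. D j \<subseteq> B \<longrightarrow> (\<exists>C\<in>pi_set m. D j \<subseteq> C \<and> D k \<subseteq> C))"
        if "D k \<subseteq> A" for k using neg that by meson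
      define Bf where "Bf k = (SOME B. B \<in> pi_set m \<and> \<not> D n \<subseteq> B \<and> (\<forall>j. D j \<subseteq> B \<longrightarrow> (\<exists>C\<in>pi_set m. D j \<subseteq> C \<and> D k \<subseteq> C)))" for k
      define Cf where "Cf k j = (SOME C. C \<in> pi_set m \<and> D j \<subseteq> C \<and> D k \<subseteq> C)" for k j
      have Bf: "Bf k \<in> pi_set m \<and> \<not> D n \<subseteq> Bf k \<and> (\<forall>j. D j \<subseteq> Bf k \<longrightarrow> (\<exists>C\<in>pi_set m. D j \<subseteq> C \<and> D k \<subseteq> C))"
        if "D k \<subseteq> A" for k unfolding Bf_def by (rule someI_ex[OF ex[OF that]])
      have Cf: "Cf k j \<in> pi_set m \<and> D j \<subseteq> Cf k j \<and> D k \<subseteq> Cf k j"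
        if ex2: "\<exists>C\<in>pi_set m. D j \<subseteq> C \<and> D k \<subseteq> C" for k j
      proof -
        obtain C where "C \<in> pi_set m \<and> D j \<subseteq> C \<and> D k \<subseteq> C" using ex2 by blast
        then show ?thesis unfolding Cf_def by (rule someI)
      qed
      define R where "R = (\<lambda>j. if j \<le> 5 then R0 j else if j = 10 then (\<lambda>y. y \<in> A)
         else if j = 11 then (\<lambda>y. snd (prod_decode y) \<in> Bf (fst (prod_decode y)))
         else (\<lambda>y. snd (prod_decode y) \<in> Cf (fst (prod_decode (fst (prod_decode y)))) (snd (prod_decode (fst (prod_decode y))))))"
      have G: "Good R" unfolding R_def by (rule Good_ext)
      have R10: "R 10 = (\<lambda>y. y \<in> A)" and R11: "\<And>k x. R 11 (pe k x) = (x \<in> Bf k)"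
        and R12: "\<And>k j x. R 12 (pe (pe k j) x) = (x \<in> Cf k j)" unfolding R_def by simp_all
      have "inS R m (R 10)" "Dsub R n (R 10)" using A inS_ok[OF G] Dsub_ok[OF G] by (simp_all add: R10)
      moreover have "Phi3 m R" using P by blast
      ultimately obtain k where k: "Dsub R k (R 10)"
        "inS R m (\<lambda>x. R 11 (pe k x)) \<and> \<not> Dsub R n (\<lambda>x. R 11 (pe k x)) \<longrightarrow>
          (\<exists>j. Dsub R j (\<lambda>x. R 11 (pe k x)) \<and>
             \<not> (inS R m (\<lambda>x. R 12 (pe (pe k j) x)) \<and> Dsub R j (\<lambda>x. R 12 (pe (pe k j) x)) \<and>
                  Dsub R k (\<lambda>x. R 12 (pe (pe k j) x))))"
        using G unfolding Phi3_def by meson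
      have kA: "D k \<subseteq> A" using k(1) Dsub_ok[OF G] by (simp add: R10)
      have k2: "Bf k \<in> pi_set m \<and> \<not> D n \<subseteq> Bf k \<longrightarrow>
          (\<exists>j. D j \<subseteq> Bf k \<and> \<not> (Cf k j \<in> pi_set m \<and> D j \<subseteq> Cf k j \<and> D k \<subseteq> Cf k j))"
        using k(2) by (simp add: inS_ok[OF G] Dsub_ok[OF G] R11 R12)
      obtain j where j: "D j \<subseteq> Bf k" "\<not> (Cf k j \<in> pi_set m \<and> D j \<subseteq> Cf k j \<and> D k \<subseteq> Cf k j)"
        using k2 Bf[OF kA] by meson
      show False using Cf[of j k] Bf[OF kA] j by meson
    qed
  qed
qed

lemma Pi11_regular: "Pi11 {m. regular_space (pi_top m)}"
proof (rule Pi11I[where Phi=Phi3])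
  show "ar (\<lambda>e X. Phi3 (e 0) (\<lambda>j y. pe j y \<in> X))"
    unfolding Phi3_def inS_def inU_def Dsub_def by (intro ar_intros df_intros ar_Good')
  show "\<And>m. m \<in> {m. regular_space (pi_top m)} \<longleftrightarrow> (\<forall>R. Phi3 m R)" using Phi3_ok by simp
qed

lemma metrizable_iff_regular: "metrizable_space (pi_top m) \<longleftrightarrow> regular_space (pi_top m)"
  using metrizable_imp_regular_space metrization[OF _ second_countable_pi t0_pi] by blast

theorem proposition24:
  shows "Pi11 {m. t1_space (pi_top m)}
       \<and> Pi11 {m. Hausdorff_space (pi_top m)}
       \<and> Pi11 {m. regular_space (pi_top m)}
       \<and> Pi11 {m. metrizable_space (pi_top m)}"
  using Pi11_t1 Pi11_Hausdorff Pi11_regular by (simp add: metrizable_iff_regular)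


end
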